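(* Let $S$ be a set of $n$ points in the plane in convex position. Then the number of ordered ncp partitions that $S$ admits is $\mathcal{O}^*(4.642126305^n)$.
   Context: A non-crossing path partition (ncp partition) of a planar point set $S$ is a graph with vertex set $S$ and straight-line edges, no two of which cross, every connected component of which is a path; isolated vertices (singletons) are allowed and regarded as paths of length $0$. For $S$ a set of $n$ points in convex position numbered clockwise from $1$ to $n$, an ordered ncp partition is an ncp partition of $S$ such that whenever $i<j$ are the two endpoints of a path, no endpoint of any other path lies strictly between $i$ and $j$ (in this numbering). The notation $\mathcal{O}^*(c^n)$ means $O(p(n)\,c^n)$ for some polynomial $p$, i.e. polynomial factors are neglected. *)

theory Defs
  imports "HOL-Analysis.Analysis"
begin

type_synonym point = "real \<times> real"

definition convex_position :: "point set \<Rightarrow> bool" where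
  "convex_position S \<longleftrightarrow> (\<forall>p\<in>S. p \<notin> convex hull (S - {p}))"

text \<open>Orientation determinant; negative means a, b, c is a clockwise turn.\<close>
definition orient :: "point \<Rightarrow> point \<Rightarrow> point \<Rightarrow> real" where
  "orient a b c = (fst b - fst a) * (snd c - snd a) - (snd b - snd a) * (fst c - fst a)"

definition clockwise_numbering :: "nat \<Rightarrow> (nat \<Rightarrow> point) \<Rightarrow> point set \<Rightarrow> bool" where
  "clockwise_numbering n num S \<longleftrightarrow> bij_betw num {1..n} S \<and>
     (\<forall>i j k. 1 \<le> i \<and> i < j \<and> j < k \<and> k \<le> n \<longrightarrow> orient (num i) (num j) (num k) < 0)"

definition path_edges :: "'a list \<Rightarrow> 'a set set" where
  "path_edges vs = {{vs ! i, vs ! Suc i} | i. Suc i < length vs}"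

text \<open>P is a decomposition of S into vertex-disjoint paths (singletons allowed)
whose edges are exactly E; so the graph (S, E) has exactly these paths as components.\<close>
definition path_decomposition :: "'a set \<Rightarrow> 'a set set \<Rightarrow> 'a list set \<Rightarrow> bool" where
  "path_decomposition S E P \<longleftrightarrow>
     (\<forall>vs\<in>P. vs \<noteq> [] \<and> distinct vs) \<and>
     (\<forall>vs\<in>P. \<forall>ws\<in>P. vs \<noteq> ws \<longrightarrow> set vs \<inter> set ws = {}) \<and>
     (\<Union>vs\<in>P. set vs) = S \<and>
     E = (\<Union>vs\<in>P. path_edges vs)"

definition non_crossing :: "point set set \<Rightarrow> bool" where
  "non_crossing E \<longleftrightarrow>
     (\<forall>e1\<in>E. \<forall>e2\<in>E. e1 \<noteq> e2 \<longrightarrow> convex hull e1 \<inter> convex hull e2 \<subseteq> e1 \<inter> e2)"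

definition ncp_partition :: "point set \<Rightarrow> point set set \<Rightarrow> bool" where
  "ncp_partition S E \<longleftrightarrow> non_crossing E \<and> (\<exists>P. path_decomposition S E P)"

definition ordered_ncp_partition ::
    "point set \<Rightarrow> nat \<Rightarrow> (nat \<Rightarrow> point) \<Rightarrow> point set set \<Rightarrow> bool" where
  "ordered_ncp_partition S n num E \<longleftrightarrow> non_crossing E \<and>
     (\<exists>P. path_decomposition S E P \<and>
        (\<forall>vs\<in>P. \<forall>ws\<in>P. vs \<noteq> ws \<longrightarrow>
           (let idx = inv_into {1..n} num;
                i = min (idx (hd vs)) (idx (last vs));
                j = max (idx (hd vs)) (idx (last vs))
            in i < j \<longrightarrow>
               (\<forall>x\<in>{hd ws, last ws}. \<not> (i < idx x \<and> idx x < j)))))"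

end

theory Submission
  imports Defs
begin


lemma orient_cyc: "orient a b c = orient b c a" "orient a b c = - orient a c b"
  unfolding orient_def by (auto simp: algebra_simps)

lemma segs_meet:
  fixes p1 p2 p3 p4 :: point
  assumes o1: "orient p1 p3 p4 < 0" and o2: "orient p2 p3 p4 > 0"
      and o3: "orient p1 p2 p3 > 0" and o4: "orient p1 p2 p4 < 0"
  shows "\<exists>z. z \<in> closed_segment p1 p2 \<and> z \<in> closed_segment p3 p4"
proof -
  obtain x1 y1 where P1: "p1 = (x1,y1)" by (cases p1)
  obtain x2 y2 where P2: "p2 = (x2,y2)" by (cases p2)
  obtain x3 y3 where P3: "p3 = (x3,y3)" by (cases p3)
  obtain x4 y4 where P4: "p4 = (x4,y4)" by (cases p4)
  define A where "A = orient p1 p3 p4"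
  define B where "B = orient p2 p3 p4"
  define C where "C = orient p1 p2 p3"
  define D where "D = orient p1 p2 p4"
  define t where "t = A / (A - B)"
  define s where "s = C / (C - D)"
  have t01: "0 \<le> t" "t \<le> 1" using o1 o2 unfolding t_def A_def B_def by (auto simp: divide_simps)
  have s01: "0 \<le> s" "s \<le> 1" using o3 o4 unfolding s_def C_def D_def by (auto simp: divide_simps)
  have AB: "A - B \<noteq> 0" using o1 o2 A_def B_def by auto
  have CD: "C - D \<noteq> 0" using o3 o4 C_def D_def by auto
  have eq: "(1 - t) *\<^sub>R p1 + t *\<^sub>R p2 = (1 - s) *\<^sub>R p3 + s *\<^sub>R p4"
    using AB CD unfolding t_def s_def A_def B_def C_def D_def P1 P2 P3 P4 orient_def
    by (simp add: field_simps)
  show ?thesis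
  proof (rule exI[of _ "(1 - t) *\<^sub>R p1 + t *\<^sub>R p2"], rule conjI)
    show "(1 - t) *\<^sub>R p1 + t *\<^sub>R p2 \<in> closed_segment p1 p2"
      using t01 unfolding closed_segment_def by blast
    show "(1 - t) *\<^sub>R p1 + t *\<^sub>R p2 \<in> closed_segment p3 p4"
      using s01 unfolding eq closed_segment_def by blast
  qed
qed


definition cnoncross :: "nat set set \<Rightarrow> bool" where
  "cnoncross E \<longleftrightarrow> (\<forall>a b c d. {a,b} \<in> E \<longrightarrow> {c,d} \<in> E \<longrightarrow> a < c \<longrightarrow> c < b \<longrightarrow> b < d \<longrightarrow> False)"

definition walk :: "'a set set \<Rightarrow> 'a list \<Rightarrow> bool" where
  "walk E zs \<longleftrightarrow> (\<forall>i. Suc i < length zs \<longrightarrow> {zs!i, zs!Suc i} \<in> E)"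

definition betw :: "nat \<Rightarrow> nat \<Rightarrow> nat \<Rightarrow> bool" where
  "betw v x y \<longleftrightarrow> min x y < v \<and> v < max x y"

lemma betw_sym: "betw v x y = betw v y x"
  unfolding betw_def by auto

lemma betw_xor: "v \<noteq> x \<Longrightarrow> v \<noteq> y \<Longrightarrow> betw v x y \<longleftrightarrow> ((x < v) \<noteq> (y < v))"
  unfolding betw_def by auto

lemma chord_cross:
  assumes nc: "cnoncross E" and e1: "{x,y} \<in> E" and e2: "{u,w} \<in> E"
    and b1: "betw u x y" and b2: "\<not> betw w x y" and "w \<noteq> x" "w \<noteq> y"
  shows False
proof -
  have X: "\<And>x y. {x,y} \<in> E \<Longrightarrow> {u,w} \<in> E \<Longrightarrow> x < u \<Longrightarrow> u < y \<Longrightarrow> w \<noteq> x \<Longrightarrow> w \<noteq> y \<Longrightarrow> \<not> (x < w \<and> w < y) \<Longrightarrow> False"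
  proof -
    fix x y assume A: "{x,y} \<in> E" "{u,w} \<in> E" "x < u" "u < y" "w \<noteq> x" "w \<noteq> y" "\<not> (x < w \<and> w < y)"
    show False
    proof (cases "w < x")
      case True
      have "{w,u} \<in> E" using A(2) by (simp add: insert_commute)
      then show False using nc A True unfolding cnoncross_def by blast
    next
      case False
      then have "y < w" using A by auto
      then show False using nc A unfolding cnoncross_def by blast
    qed
  qed
  show False
  proof (cases "x < y")
    case True
    then show False using X[of x y] e1 e2 b1 b2 assms(6,7) unfolding betw_def by auto
  next
    case False
    have "{y,x} \<in> E" using e1 by (simp add: insert_commute)
    then show False using X[of y x] False e2 b1 b2 assms(6,7) unfolding betw_def by auto
  qed
qed

lemma walk_find:
  assumes "zs \<noteq> []" "P (hd zs)" "\<not> P (last zs)"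
  shows "\<exists>i. Suc i < length zs \<and> P (zs!i) \<and> \<not> P (zs!Suc i)"
  using assms
proof (induction zs)
  case Nil then show ?case by simp
next
  case (Cons z zs)
  show ?case
  proof (cases "zs = []")
    case True then show ?thesis using Cons by simp
  next
    case False
    show ?thesis
    proof (cases "P (hd zs)")
      case True
      then obtain i where "Suc i < length zs" "P (zs!i)" "\<not> P (zs!Suc i)"
        using Cons False by auto
      then show ?thesis by (intro exI[of _ "Suc i"]) auto
    next
      case F: False
      show ?thesis using Cons F False by (intro exI[of _ 0]) (auto simp: hd_conv_nth)
    qed
  qed
qed

lemma walk_Cons: "walk E (z # zs) \<longleftrightarrow> (zs = [] \<or> {z, hd zs} \<in> E) \<and> walk E zs"
  unfolding walk_def
  apply (cases zs)
   apply simp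
  apply (auto simp: nth_Cons split: nat.splits)
  done

lemma walk_take: "walk E zs \<Longrightarrow> walk E (take k zs)"
  unfolding walk_def by auto

lemma walk_drop: "walk E zs \<Longrightarrow> walk E (drop k zs)"
  unfolding walk_def by (auto simp: add.commute[of k] dest: spec[of _ "_ + k"])

lemma walk_rev: "walk E zs \<Longrightarrow> walk E (rev zs)"
  unfolding walk_def
proof (intro allI impI)
  fix i assume W: "\<forall>i. Suc i < length zs \<longrightarrow> {zs ! i, zs ! Suc i} \<in> E"
    and i: "Suc i < length (rev zs)"
  define j where "j = length zs - Suc (Suc i)"
  have "Suc j < length zs" using i j_def by auto
  then have "{zs ! j, zs ! Suc j} \<in> E" using W by auto
  moreover have "rev zs ! i = zs ! Suc j" "rev zs ! Suc i = zs ! j"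
    using i j_def by (auto simp: rev_nth Suc_diff_Suc)
  ultimately show "{rev zs ! i, rev zs ! Suc i} \<in> E" by (simp add: insert_commute)
qed

lemma sep:
  assumes nc: "cnoncross E" and w: "walk E zs" and ne: "zs \<noteq> []" and e: "{x,y} \<in> E"
    and "x \<notin> set zs" "y \<notin> set zs" and b1: "betw (hd zs) x y" and b2: "\<not> betw (last zs) x y"
  shows False
proof -
  obtain i where i: "Suc i < length zs" "betw (zs!i) x y" "\<not> betw (zs!Suc i) x y"
    using walk_find[of zs "\<lambda>v. betw v x y"] ne b1 b2 by auto
  have "{zs!i, zs!Suc i} \<in> E" using w i unfolding walk_def by auto
  moreover have "zs!Suc i \<noteq> x" "zs!Suc i \<noteq> y" using assms(5,6) i(1) nth_mem[of "Suc i" zs] by auto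
  ultimately show False using chord_cross[OF nc e _ i(2) i(3)] by auto
qed

lemma parity:
  assumes "zs \<noteq> []" "v1 \<notin> set zs" "v2 \<notin> set zs"
    "\<forall>i. Suc i < length zs \<longrightarrow> (betw v1 (zs!i) (zs!Suc i) \<longleftrightarrow> betw v2 (zs!i) (zs!Suc i))"
  shows "betw v1 (hd zs) (last zs) \<longleftrightarrow> betw v2 (hd zs) (last zs)"
  using assms
proof (induction zs)
  case Nil then show ?case by simp
next
  case (Cons z zs)
  show ?case
  proof (cases "zs = []")
    case True then show ?thesis by (auto simp: betw_def)
  next
    case False
    have IH: "betw v1 (hd zs) (last zs) \<longleftrightarrow> betw v2 (hd zs) (last zs)"
    proof -
      have "\<forall>i. Suc i < length zs \<longrightarrow> (betw v1 (zs!i) (zs!Suc i) \<longleftrightarrow> betw v2 (zs!i) (zs!Suc i))"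
      proof (intro allI impI)
        fix i assume "Suc i < length zs"
        then show "betw v1 (zs!i) (zs!Suc i) \<longleftrightarrow> betw v2 (zs!i) (zs!Suc i)"
          using spec[OF Cons.prems(4), of "Suc i"] by auto
      qed
      then show ?thesis using Cons.IH[OF False] Cons.prems(2,3) by auto
    qed
    have h0: "betw v1 z (hd zs) \<longleftrightarrow> betw v2 z (hd zs)"
      using Cons.prems(4) False spec[OF Cons.prems(4), of 0] by (auto simp: hd_conv_nth)
    have mem: "hd zs \<in> set zs" "last zs \<in> set zs" using False by auto
    have "\<And>v. v \<notin> set (z#zs) \<Longrightarrow> betw v z (last zs) \<longleftrightarrow> (betw v z (hd zs) \<noteq> betw v (hd zs) (last zs))"
    proof -
      fix v assume "v \<notin> set (z#zs)"
      then have "v \<noteq> z" "v \<noteq> hd zs" "v \<noteq> last zs" using mem by auto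
      then show "betw v z (last zs) \<longleftrightarrow> (betw v z (hd zs) \<noteq> betw v (hd zs) (last zs))"
        unfolding betw_def by auto
    qed
    then show ?thesis using IH h0 Cons.prems(2,3) False by auto
  qed
qed

lemma cross2:
  assumes nc: "cnoncross E" and w1: "walk E S1" and w2: "walk E S2" and ne1: "S1 \<noteq> []" and ne2: "S2 \<noteq> []"
    and dj: "set S1 \<inter> set S2 = {}"
    and b: "betw (hd S2) (hd S1) (last S1) \<noteq> betw (last S2) (hd S1) (last S1)"
  shows False
proof -
  have "hd S2 \<notin> set S1" "last S2 \<notin> set S1" using dj ne2 by auto
  then obtain i where i: "Suc i < length S1"
     "\<not> (betw (hd S2) (S1!i) (S1!Suc i) \<longleftrightarrow> betw (last S2) (S1!i) (S1!Suc i))"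
    using parity[of S1 "hd S2" "last S2"] ne1 b by blast
  have e: "{S1!i, S1!Suc i} \<in> E" using w1 i unfolding walk_def by auto
  have "S1!i \<in> set S1" "S1!Suc i \<in> set S1" using i(1) by auto
  then have nin: "S1!i \<notin> set S2" "S1!Suc i \<notin> set S2" using dj by auto
  show False
  proof (cases "betw (hd S2) (S1!i) (S1!Suc i)")
    case True
    then show False using sep[OF nc w2 ne2 e nin] i by auto
  next
    case False
    then have "betw (hd (rev S2)) (S1!i) (S1!Suc i)" "\<not> betw (last (rev S2)) (S1!i) (S1!Suc i)"
      using i ne2 by (auto simp: hd_rev last_rev)
    then show False using sep[OF nc walk_rev[OF w2] _ e] nin ne2 by auto
  qed
qed


definition cordered :: "nat list set \<Rightarrow> bool" where
  "cordered P \<longleftrightarrow> (\<forall>vs\<in>P. \<forall>ws\<in>P. vs \<noteq> ws \<longrightarrow>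
     (let i = min (hd vs) (last vs); j = max (hd vs) (last vs)
      in i < j \<longrightarrow> (\<forall>x\<in>{hd ws, last ws}. \<not> (i < x \<and> x < j))))"

definition cvalidP :: "nat set \<Rightarrow> nat set set \<Rightarrow> nat list set \<Rightarrow> bool" where
  "cvalidP V E P \<longleftrightarrow> path_decomposition V E P \<and> cnoncross E \<and> cordered P"

definition validE :: "nat set \<Rightarrow> nat set set set" where
  "validE V = {E. \<exists>P. cvalidP V E P}"

lemma path_edges_walk: "walk (path_edges vs) vs"
  unfolding walk_def path_edges_def by auto

lemma path_edges_sub: "e \<in> path_edges vs \<Longrightarrow> e \<subseteq> set vs"
  unfolding path_edges_def by auto

lemma path_edges_rev: "path_edges (rev vs) = path_edges vs"
proof -
  have A: "path_edges (rev vs) \<subseteq> path_edges vs" for vs :: "'a list"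
  proof
    fix e assume "e \<in> path_edges (rev vs)"
    then obtain i where i: "Suc i < length vs" "e = {rev vs ! i, rev vs ! Suc i}"
      unfolding path_edges_def by auto
    define j where "j = length vs - Suc (Suc i)"
    have j: "Suc j < length vs" using i j_def by auto
    have "rev vs ! i = vs ! Suc j" "rev vs ! Suc i = vs ! j"
      using i j_def by (auto simp: rev_nth Suc_diff_Suc)
    then have "e = {vs ! j, vs ! Suc j}" using i by auto
    then show "e \<in> path_edges vs" using j unfolding path_edges_def by auto
  qed
  show ?thesis using A[of vs] A[of "rev vs"] by auto
qed

lemma cnoncross_mono: "cnoncross E \<Longrightarrow> E' \<subseteq> E \<Longrightarrow> cnoncross E'"
  unfolding cnoncross_def by blast

lemma cordered_mono: "cordered P \<Longrightarrow> Q \<subseteq> P \<Longrightarrow> cordered Q"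
  unfolding cordered_def by (metis subsetD)

lemma cvalid_restrict:
  assumes "cvalidP V E P" "Q \<subseteq> P"
  shows "cvalidP (\<Union>vs\<in>Q. set vs) (\<Union>vs\<in>Q. path_edges vs) Q"
proof -
  have pd: "path_decomposition V E P" and nc: "cnoncross E" and co: "cordered P"
    using assms(1) unfolding cvalidP_def by auto
  have EE: "E = (\<Union>vs\<in>P. path_edges vs)" using pd unfolding path_decomposition_def by auto
  have sub: "(\<Union>vs\<in>Q. path_edges vs) \<subseteq> E" unfolding EE using assms(2) by auto
  have "path_decomposition (\<Union>vs\<in>Q. set vs) (\<Union>vs\<in>Q. path_edges vs) Q"
    using pd assms(2) unfolding path_decomposition_def by (simp add: subset_iff)
  moreover have "cnoncross (\<Union>vs\<in>Q. path_edges vs)" using cnoncross_mono[OF nc sub] .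
  moreover have "cordered Q" using cordered_mono[OF co assms(2)] .
  ultimately show ?thesis unfolding cvalidP_def by auto
qed

lemma cvalid_E: "cvalidP V E P \<Longrightarrow> E = (\<Union>vs\<in>P. path_edges vs)"
  unfolding cvalidP_def path_decomposition_def by auto

lemma cvalid_walk: "cvalidP V E P \<Longrightarrow> vs \<in> P \<Longrightarrow> walk E vs"
proof -
  assume a: "cvalidP V E P" "vs \<in> P"
  have "path_edges vs \<subseteq> E" using cvalid_E[OF a(1)] a(2) by auto
  then show ?thesis using path_edges_walk[of vs] unfolding walk_def by auto
qed

lemma cvalid_distinct: "cvalidP V E P \<Longrightarrow> vs \<in> P \<Longrightarrow> distinct vs \<and> vs \<noteq> []"
  unfolding cvalidP_def path_decomposition_def by auto

lemma cvalid_setsub: "cvalidP V E P \<Longrightarrow> vs \<in> P \<Longrightarrow> set vs \<subseteq> V"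
  unfolding cvalidP_def path_decomposition_def by auto

lemma cvalid_disj: "cvalidP V E P \<Longrightarrow> vs \<in> P \<Longrightarrow> ws \<in> P \<Longrightarrow> vs \<noteq> ws \<Longrightarrow> set vs \<inter> set ws = {}"
  unfolding cvalidP_def path_decomposition_def by auto

lemma cvalid_cover: "cvalidP V E P \<Longrightarrow> v \<in> V \<Longrightarrow> \<exists>ws\<in>P. v \<in> set ws"
  unfolding cvalidP_def path_decomposition_def by auto

lemma cvalid_nc: "cvalidP V E P \<Longrightarrow> cnoncross E"
  unfolding cvalidP_def by blast

lemma validE_Pow: "E \<in> validE V \<Longrightarrow> E \<subseteq> Pow V"
proof
  fix e assume "E \<in> validE V" "e \<in> E"
  then obtain P where P: "cvalidP V E P" unfolding validE_def by auto
  then obtain vs where "vs \<in> P" "e \<in> path_edges vs" using cvalid_E[OF P] \<open>e \<in> E\<close> by auto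
  then show "e \<in> Pow V" using path_edges_sub cvalid_setsub[OF P] by blast
qed

lemma validE_empty: "validE {} = {{}}"
proof -
  have "cvalidP {} {} {}" unfolding cvalidP_def path_decomposition_def cnoncross_def cordered_def by simp
  moreover have "E = {}" if "cvalidP {} E P" for E P
  proof -
    have A: "\<forall>vs\<in>P. vs \<noteq> []" and B: "(\<Union>vs\<in>P. set vs) = {}" and C: "E = (\<Union>vs\<in>P. path_edges vs)"
      using that unfolding cvalidP_def path_decomposition_def by auto
    have "P = {}"
    proof (rule ccontr)
      assume "P \<noteq> {}"
      then obtain vs where "vs \<in> P" by blast
      then show False using A B by auto
    qed
    then show ?thesis using C by simp
  qed
  ultimately show ?thesis unfolding validE_def by auto
qed

lemma validE_sub: "validE V \<subseteq> Pow (Pow V)"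
  using validE_Pow by blast

lemma finite_validE: "finite V \<Longrightarrow> finite (validE V)"
  using validE_sub finite_subset by (metis finite_Pow_iff)

lemma card_validE_le: "finite V \<Longrightarrow> card (validE V) \<le> 2 ^ 2 ^ card V"
proof -
  assume f: "finite V"
  have "card (validE V) \<le> card (Pow (Pow V))"
    using validE_sub f by (simp add: card_mono)
  also have "\<dots> = 2 ^ 2 ^ card V" using f by (simp add: card_Pow)
  finally show ?thesis .
qed

lemma subwalk:
  assumes "walk E vs" "i < length vs" "j < length vs"
  shows "\<exists>zs. walk E zs \<and> zs \<noteq> [] \<and> hd zs = vs!i \<and> last zs = vs!j \<and> set zs \<subseteq> set vs"
proof (cases "i \<le> j")
  case True
  define zs where "zs = drop i (take (Suc j) vs)"
  have "walk E zs" unfolding zs_def using assms walk_take walk_drop by blast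
  moreover have "zs \<noteq> []" "hd zs = vs!i" "last zs = vs!j" using True assms
    by (auto simp: zs_def hd_drop_conv_nth last_conv_nth min_def le_Suc_eq Suc_le_eq dest: le_antisym)
  moreover have "set zs \<subseteq> set vs" unfolding zs_def by (meson in_set_dropD in_set_takeD subsetI)
  ultimately show ?thesis by blast
next
  case False
  define zs where "zs = rev (drop j (take (Suc i) vs))"
  have "walk E zs" unfolding zs_def using assms walk_take walk_drop walk_rev by blast
  moreover have "zs \<noteq> []" "hd zs = vs!i" "last zs = vs!j" using False assms
    by (auto simp: zs_def hd_rev last_rev hd_drop_conv_nth last_conv_nth min_def le_Suc_eq Suc_le_eq dest: le_antisym)
  moreover have "set zs \<subseteq> set vs" unfolding zs_def by (auto dest: in_set_dropD in_set_takeD)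
  ultimately show ?thesis by blast
qed

lemma subwalk':
  assumes "walk E vs" "x \<in> set vs" "y \<in> set vs"
  shows "\<exists>zs. walk E zs \<and> zs \<noteq> [] \<and> hd zs = x \<and> last zs = y \<and> set zs \<subseteq> set vs"
  using subwalk[OF assms(1)] assms(2,3) by (metis in_set_conv_nth)

definition gap :: "nat set \<Rightarrow> nat set \<Rightarrow> nat \<Rightarrow> nat set" where
  "gap V W w = {v\<in>V. w < v \<and> (\<forall>w'\<in>W. w < w' \<longrightarrow> v < w')}"

lemma gap_owner:
  fixes x m :: nat
  assumes "finite W" "m \<in> W" "m < x" 
  shows "\<exists>w\<in>W. w < x \<and> (\<forall>w'\<in>W. w < w' \<longrightarrow> x \<le> w')"
proof -
  define w where "w = Max {w\<in>W. w < x}"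
  have ne: "{w\<in>W. w < x} \<noteq> {}" using assms by auto
  have fin: "finite {w\<in>W. w < x}" using assms by auto
  have "w \<in> {w\<in>W. w < x}" unfolding w_def using Max_in[OF fin ne] .
  moreover have "\<forall>w'\<in>W. w < w' \<longrightarrow> x \<le> w'"
  proof (intro ballI impI)
    fix w' assume "w' \<in> W" "w < w'"
    show "x \<le> w'"
    proof (rule ccontr)
      assume "\<not> x \<le> w'"
      then have "w' \<le> w" using Max_ge[OF fin, of w'] \<open>w' \<in> W\<close> unfolding w_def by auto
      then show False using \<open>w < w'\<close> by auto
    qed
  qed
  ultimately show ?thesis by auto
qed

lemma gap_cover:
  fixes x :: nat
  assumes "finite W" "Min V \<in> W" "finite V" "x \<in> V" "x \<notin> W"
  shows "\<exists>w\<in>W. x \<in> gap V W w"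
proof -
  have "Min V \<le> x" using assms by auto
  then have "Min V < x" using assms by (metis order_le_less)
  then obtain w where "w\<in>W" "w < x" "\<forall>w'\<in>W. w < w' \<longrightarrow> x \<le> w'" using gap_owner assms by blast
  moreover have "\<forall>w'\<in>W. w < w' \<longrightarrow> x < w'"
    using \<open>\<forall>w'\<in>W. w < w' \<longrightarrow> x \<le> w'\<close> assms(5) by (metis order_le_less)
  ultimately show ?thesis using assms unfolding gap_def by auto
qed

lemma gap_unique:
  assumes "x \<in> gap V W w1" "x \<in> gap V W w2" "w1 \<in> W" "w2 \<in> W"
  shows "w1 = w2"
  using assms by (cases w1 w2 rule: linorder_cases) (auto simp: gap_def)

lemma gap_notin: "x \<in> gap V W w \<Longrightarrow> w \<in> W \<Longrightarrow> x \<notin> W"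
  unfolding gap_def by auto


definition ori :: "nat list \<Rightarrow> nat list" where
  "ori vs = (if hd vs < last vs then vs else rev vs)"

lemma sorted_wrt_filter_rel:
  "sorted_wrt (\<lambda>x y. Q x \<longrightarrow> Q y \<longrightarrow> R x y) xs \<Longrightarrow> sorted_wrt R (filter Q xs)"
  by (induction xs) auto

lemma sorted_list_of_set_strict:
  fixes xs :: "nat list"
  assumes "sorted_wrt (<) xs" shows "sorted_list_of_set (set xs) = xs"
  using assms by (metis sorted_list_of_set.distinct_sorted_key_list_of_set sorted_list_of_set.sorted_sorted_key_list_of_set
      sorted_list_of_set.set_sorted_key_list_of_set List.finite_set sorted_distinct_set_unique strict_sorted_iff)

lemma filter_split:
  assumes "sorted_wrt (\<lambda>x y. \<not> (Q2 x \<and> Q1 y)) xs" "\<forall>x\<in>set xs. Q x \<longleftrightarrow> (Q1 x \<or> Q2 x)"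
    "\<forall>x. \<not> (Q1 x \<and> Q2 x)"
  shows "filter Q xs = filter Q1 xs @ filter Q2 xs"
  using assms
proof (induction xs)
  case Nil then show ?case by simp
next
  case (Cons x xs)
  have IH: "filter Q xs = filter Q1 xs @ filter Q2 xs" using Cons by auto
  show ?case
  proof (cases "Q2 x")
    case True
    then have "filter Q1 xs = []" using Cons.prems(1) by (auto simp: filter_empty_conv)
    then show ?thesis using IH True Cons.prems by auto
  next
    case False
    then show ?thesis using IH Cons.prems by auto
  qed
qed

lemma list_determined:
  assumes "map Q xs = map Q ys" "filter Q xs = filter Q ys" "filter (\<lambda>x. \<not> Q x) xs = filter (\<lambda>x. \<not> Q x) ys"
  shows "xs = ys"
  using assms
proof (induction xs arbitrary: ys)
  case Nil then show ?case by simp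
next
  case (Cons x xs)
  then obtain y ys' where ys: "ys = y # ys'" by (cases ys) auto
  show ?case
  proof (cases "Q x")
    case True
    then have "Q y" using Cons.prems ys by auto
    then show ?thesis using Cons True ys by auto
  next
    case False
    then have "\<not> Q y" using Cons.prems ys by auto
    then show ?thesis using Cons False ys by auto
  qed
qed

lemma rank_nth:
  fixes W :: "nat set"
  assumes "finite W" "x \<in> W"
  shows "sorted_list_of_set W ! card {w\<in>W. w < x} = x"
proof -
  define xs where "xs = sorted_list_of_set W"
  have s: "sorted_wrt (<) xs" unfolding xs_def by (simp add: strict_sorted_iff)
  have sx: "set xs = W" unfolding xs_def using assms by simp
  obtain k where k: "k < length xs" "xs ! k = x" using sx assms by (metis in_set_conv_nth)
  have "{w\<in>W. w < x} = set (take k xs)"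
  proof
    show "{w\<in>W. w < x} \<subseteq> set (take k xs)"
    proof
      fix w assume "w \<in> {w\<in>W. w < x}"
      then obtain j where j: "j < length xs" "xs ! j = w" "w < x" using sx by (auto simp: in_set_conv_nth)
      have "j < k"
      proof (rule ccontr)
        assume "\<not> j < k"
        then have "k \<le> j" by simp
        then have "xs ! k \<le> xs ! j" using s j k by (metis order_le_less sorted_wrt_iff_nth_less less_imp_le)
        then show False using j k by auto
      qed
      then show "w \<in> set (take k xs)" using j k by (auto simp: in_set_conv_nth)
    qed
  next
    show "set (take k xs) \<subseteq> {w\<in>W. w < x}"
    proof
      fix w assume "w \<in> set (take k xs)"
      then obtain j where j: "j < k" "xs ! j = w" using k by (auto simp: in_set_conv_nth)
      then have "w < x" using s k sorted_wrt_iff_nth_less by metis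
      then show "w \<in> {w\<in>W. w < x}" using j k sx by auto
    qed
  qed
  then have "card {w\<in>W. w < x} = k"
    using k distinct_take[of xs k] s by (simp add: distinct_card strict_sorted_iff)
  then show ?thesis using k xs_def by simp
qed

context
  fixes V :: "nat set" and E P vs
  assumes finV: "finite V" and val: "cvalidP V E P" and vsP: "vs \<in> P"
    and mV: "Min V \<in> set vs" and len2: "2 \<le> length vs"
begin

lemma vs_dist: "distinct vs" and vs_ne: "vs \<noteq> []"
  using cvalid_distinct[OF val vsP] by auto

lemma hd_ne_last: "hd vs \<noteq> last vs"
proof -
  have "hd vs = vs ! 0" "last vs = vs ! (length vs - 1)" using vs_ne by (auto simp: hd_conv_nth last_conv_nth)
  moreover have "vs ! 0 \<noteq> vs ! (length vs - 1)"
    using nth_eq_iff_index_eq[OF vs_dist, of 0 "length vs - 1"] len2 vs_ne by auto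
  ultimately show ?thesis by simp
qed

lemma ori_props:
  "distinct (ori vs)" "set (ori vs) = set vs" "walk E (ori vs)" "path_edges (ori vs) = path_edges vs"
  "length (ori vs) = length vs" "hd (ori vs) < last (ori vs)"
  "min (hd vs) (last vs) = hd (ori vs)" "max (hd vs) (last vs) = last (ori vs)"
  "ori vs \<noteq> []"
  using vs_dist cvalid_walk[OF val vsP] walk_rev path_edges_rev hd_ne_last vs_ne
  by (auto simp: ori_def hd_rev last_rev)

lemma full:
  assumes v: "v \<in> V" "hd (ori vs) < v" "v < last (ori vs)"
  shows "v \<in> set vs"
proof (rule ccontr)
  assume nv: "v \<notin> set vs"
  obtain ws where ws: "ws \<in> P" "v \<in> set ws" using cvalid_cover[OF val v(1)] by auto
  have wsvs: "ws \<noteq> vs" using ws nv by auto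
  have co: "cordered P" using val unfolding cvalidP_def by auto
  have "min (hd vs) (last vs) < max (hd vs) (last vs) \<longrightarrow> (\<forall>x\<in>{hd ws, last ws}. \<not> (min (hd vs) (last vs) < x \<and> x < max (hd vs) (last vs)))"
    using co vsP ws(1) wsvs unfolding cordered_def Let_def by auto
  then have "\<not> (hd (ori vs) < last ws \<and> last ws < last (ori vs))"
    using ori_props(6,7,8) by auto
  obtain zs where zs: "walk E zs" "zs \<noteq> []" "hd zs = v" "last zs = last ws" "set zs \<subseteq> set ws"
    using subwalk'[OF cvalid_walk[OF val ws(1)] ws(2), of "last ws"] cvalid_distinct[OF val ws(1)] by auto
  have dj: "set (ori vs) \<inter> set zs = {}" using cvalid_disj[OF val vsP ws(1)] wsvs zs(5) ori_props(2) by auto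
  have "last ws \<notin> set vs" using cvalid_disj[OF val vsP ws(1)] wsvs cvalid_distinct[OF val ws(1)] by auto
  then have "last ws \<noteq> hd (ori vs)" "last ws \<noteq> last (ori vs)" using ori_props(2,9) by auto
  then have "betw (hd zs) (hd (ori vs)) (last (ori vs)) \<noteq> betw (last zs) (hd (ori vs)) (last (ori vs))"
    using zs v ori_props(6) \<open>\<not> (hd (ori vs) < last ws \<and> last ws < last (ori vs))\<close> unfolding betw_def by auto
  then show False using cross2[OF cvalid_nc[OF val] ori_props(3) zs(1) ori_props(9) zs(2) dj] by auto
qed

lemma ORD: "sorted_wrt (\<lambda>x y. betw y (hd (ori vs)) x \<longleftrightarrow> betw (last (ori vs)) (hd (ori vs)) x) (ori vs)"
  unfolding sorted_wrt_iff_nth_less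
proof (intro allI impI)
  fix i j assume ij: "i < j" "j < length (ori vs)"
  define vd where "vd = ori vs"
  define S1 where "S1 = take (Suc i) vd"
  define S2 where "S2 = drop j vd"
  have w1: "walk E S1" "S1 \<noteq> []" unfolding S1_def vd_def using walk_take ori_props(3,9) by auto
  have w2: "walk E S2" "S2 \<noteq> []" unfolding S2_def vd_def using walk_drop ori_props(3) ij by auto
  have dj: "set S1 \<inter> set S2 = {}" unfolding S1_def S2_def vd_def
    using set_take_disj_set_drop_if_distinct[OF ori_props(1), of "Suc i" j] ij by auto
  have h1: "hd S1 = hd vd" "last S1 = vd ! i" unfolding S1_def using ij ori_props(9) vd_def
    by (auto simp: hd_conv_nth last_conv_nth min_def)
  have h2: "hd S2 = vd ! j" "last S2 = last vd" unfolding S2_def using ij vd_def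
    by (auto simp: hd_drop_conv_nth)
  show "betw (vd ! j) (hd vd) (vd ! i) \<longleftrightarrow> betw (last vd) (hd vd) (vd ! i)"
    using cross2[OF cvalid_nc[OF val] w1(1) w2(1) w1(2) w2(2) dj] h1 h2 by auto
qed

lemma edge_same_gap:
  assumes ws: "ws \<in> P" "ws \<noteq> vs" and e: "{x,y} \<in> E" "x \<notin> set vs" "y \<notin> set vs"
    and g: "x \<in> gap V (set vs) w1" "y \<in> gap V (set vs) w2" "w1 \<in> set vs" "w2 \<in> set vs"
  shows "w1 = w2"
proof -
  have A: "False" if xy: "{x,y} \<in> E" "x \<in> gap V (set vs) w1" "y \<in> gap V (set vs) w2" "w1 \<in> set vs" "w2 \<in> set vs" "w1 < w2"
     "x \<notin> set vs" "y \<notin> set vs" for x y w1 w2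
  proof -
    have xw2: "x < w2" "w2 < y" using xy unfolding gap_def by auto
    have "x \<in> V" using xy unfolding gap_def by auto
    then have "Min V \<le> x" using finV by auto
    then have mx: "Min V < x" using mV xy(7) by (metis order_le_less)
    obtain zs where zs: "walk E zs" "zs \<noteq> []" "hd zs = Min V" "last zs = w2" "set zs \<subseteq> set vs"
      using subwalk'[OF cvalid_walk[OF val vsP] mV xy(5)] by auto
    have w: "walk E [x,y]" using xy(1) unfolding walk_def by (auto simp: less_Suc_eq)
    have dj: "set [x,y] \<inter> set zs = {}" using zs(5) xy(7,8) by auto
    have "betw (hd zs) (hd [x,y]) (last [x,y]) \<noteq> betw (last zs) (hd [x,y]) (last [x,y])"
      using zs xw2 mx unfolding betw_def by auto
    then show False using cross2[OF cvalid_nc[OF val] w zs(1) _ zs(2) dj] by auto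
  qed
  show ?thesis
  proof (rule ccontr)
    assume "w1 \<noteq> w2"
    then consider "w1 < w2" | "w2 < w1" by linarith
    then show False
    proof cases
      case 1 then show False using A[of x y w1 w2] e g by auto
    next
      case 2
      have "{y,x} \<in> E" using e(1) by (simp add: insert_commute)
      then show False using A[of y x w2 w1] 2 e g by auto
    qed
  qed
qed

lemma comp_in_gap:
  assumes ws: "ws \<in> P" "ws \<noteq> vs"
  shows "\<exists>w\<in>set vs. set ws \<subseteq> gap V (set vs) w"
proof -
  have dj: "set vs \<inter> set ws = {}" using cvalid_disj[OF val vsP ws(1)] ws(2) by auto
  have sub: "set ws \<subseteq> V" using cvalid_setsub[OF val ws(1)] .
  have wsne: "ws \<noteq> []" using cvalid_distinct[OF val ws(1)] by auto
  have fw: "finite (set vs)" by simp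
  have own: "\<And>x. x \<in> set ws \<Longrightarrow> \<exists>w\<in>set vs. x \<in> gap V (set vs) w"
    using gap_cover[OF fw mV finV] sub dj by blast
  have "hd ws \<in> set ws" using wsne by simp
  then obtain w0 where w0: "w0 \<in> set vs" "hd ws \<in> gap V (set vs) w0" using own by blast
  have wk: "walk E ws" using cvalid_walk[OF val ws(1)] .
  have "\<forall>i<length ws. ws ! i \<in> gap V (set vs) w0"
  proof (intro allI impI)
    fix i assume "i < length ws"
    then show "ws ! i \<in> gap V (set vs) w0"
    proof (induction i)
      case 0 then show ?case using w0 wsne by (simp add: hd_conv_nth)
    next
      case (Suc i)
      have IH: "ws ! i \<in> gap V (set vs) w0" using Suc by auto
      obtain w' where w': "w' \<in> set vs" "ws ! Suc i \<in> gap V (set vs) w'" using own Suc.prems nth_mem by blast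
      have e: "{ws!i, ws!Suc i} \<in> E" using wk Suc.prems unfolding walk_def by auto
      have "ws ! i \<notin> set vs" "ws ! Suc i \<notin> set vs" using dj Suc.prems nth_mem[of i ws] nth_mem[of "Suc i" ws] by auto
      then have "w0 = w'" using edge_same_gap[OF ws e _ _ IH w'(2) w0(1) w'(1)] by auto
      then show ?case using w' by simp
    qed
  qed
  then show ?thesis using w0 by (metis in_set_conv_nth subsetI)
qed

end


lemma sorted_wrt_conj: "sorted_wrt R xs \<Longrightarrow> sorted_wrt S xs \<Longrightarrow> sorted_wrt (\<lambda>x y. R x y \<and> S x y) xs"
  by (induction xs) auto

lemma distinct_sorted_wrt_neq: "distinct xs \<Longrightarrow> sorted_wrt (\<noteq>) xs"
  by (induction xs) auto

lemma list_hd_mid_last: "2 \<le> length xs \<Longrightarrow> xs = hd xs # butlast (tl xs) @ [last xs]"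
  by (cases xs) auto

context
  fixes V :: "nat set" and E P vs
  assumes finV: "finite V" and val: "cvalidP V E P" and vsP: "vs \<in> P"
    and mV: "Min V \<in> set vs" and len2: "2 \<le> length vs"
begin

lemma vd_decomp: "ori vs = hd (ori vs) # butlast (tl (ori vs)) @ [last (ori vs)]"
proof -
  have l: "length (ori vs) \<ge> 2" using ori_props(5)[OF finV val vsP mV len2] len2 by simp
  then show ?thesis by (rule list_hd_mid_last)
qed

abbreviation "aa \<equiv> hd (ori vs)"
abbreviation "bb \<equiv> last (ori vs)"
abbreviation "mid \<equiv> butlast (tl (ori vs))"

lemma mid_facts: "distinct mid" "set mid = set vs - {aa, bb}" "length mid = length vs - 2" "aa < bb"
proof -
  note op = ori_props[OF finV val vsP mV len2]
  have d: "distinct (aa # mid @ [bb])" using op(1) vd_decomp by metis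
  then show "distinct mid" by simp
  have "set (aa # mid @ [bb]) = set vs" using op(2) vd_decomp by metis
  then show "set mid = set vs - {aa, bb}" using d by auto
  have "length (aa # mid @ [bb]) = length vs" using op(5) vd_decomp by metis
  then show "length mid = length vs - 2" by simp
  show "aa < bb" using op(6) .
qed

lemma mid_sorted: "sorted_wrt (\<lambda>x y. (betw y aa x \<longleftrightarrow> betw bb aa x) \<and> x \<noteq> y) mid"
proof -
  have "sorted_wrt (\<lambda>x y. betw y aa x \<longleftrightarrow> betw bb aa x) (aa # mid @ [bb])"
    using ORD[OF finV val vsP mV len2] vd_decomp by metis
  then have "sorted_wrt (\<lambda>x y. betw y aa x \<longleftrightarrow> betw bb aa x) mid"
    by (simp add: sorted_wrt_append)
  then show ?thesis using sorted_wrt_conj distinct_sorted_wrt_neq mid_facts(1) by blast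
qed

lemma M1: "filter (\<lambda>x. aa < x \<and> x < bb) mid = sorted_list_of_set {w\<in>set vs. aa < w \<and> w < bb}"
proof -
  have "sorted_wrt (\<lambda>x y. (aa < x \<and> x < bb) \<longrightarrow> (aa < y \<and> y < bb) \<longrightarrow> x < y) mid"
    using mid_sorted by (rule sorted_wrt_mono_rel[rotated]) (auto simp: betw_def)
  then have s: "sorted_wrt (<) (filter (\<lambda>x. aa < x \<and> x < bb) mid)" by (rule sorted_wrt_filter_rel)
  have "set (filter (\<lambda>x. aa < x \<and> x < bb) mid) = {w\<in>set vs. aa < w \<and> w < bb}"
    unfolding set_filter mid_facts(2) by auto
  then show ?thesis using sorted_list_of_set_strict[OF s] by simp
qed

lemma M2: "filter (\<lambda>x. \<not> (aa < x \<and> x < bb)) mid =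
   rev (sorted_list_of_set {w\<in>set vs. w < aa}) @ rev (sorted_list_of_set {w\<in>set vs. bb < w})"
proof -
  have ab: "aa < bb" using mid_facts(4) .
  have nab: "\<forall>x\<in>set mid. x \<noteq> aa \<and> x \<noteq> bb" using mid_facts(2) by auto
  have sp: "sorted_wrt (\<lambda>x y. \<not> ((bb < x) \<and> (y < aa))) mid"
    using mid_sorted by (rule sorted_wrt_mono_rel[rotated]) (use ab in \<open>auto simp: betw_def\<close>)
  have split: "filter (\<lambda>x. \<not> (aa < x \<and> x < bb)) mid = filter (\<lambda>x. x < aa) mid @ filter (\<lambda>x. bb < x) mid"
    by (rule filter_split[OF sp]) (use nab ab in auto)
  have sL: "sorted_wrt (\<lambda>x y. x < aa \<longrightarrow> y < aa \<longrightarrow> y < x) mid"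
    using mid_sorted by (rule sorted_wrt_mono_rel[rotated]) (use ab in \<open>auto simp: betw_def\<close>)
  have sR: "sorted_wrt (\<lambda>x y. bb < x \<longrightarrow> bb < y \<longrightarrow> y < x) mid"
    using mid_sorted by (rule sorted_wrt_mono_rel[rotated]) (use ab in \<open>auto simp: betw_def\<close>)
  have L: "sorted_wrt (<) (rev (filter (\<lambda>x. x < aa) mid))"
    using sorted_wrt_filter_rel[OF sL] by (simp add: sorted_wrt_rev)
  have R: "sorted_wrt (<) (rev (filter (\<lambda>x. bb < x) mid))"
    using sorted_wrt_filter_rel[OF sR] by (simp add: sorted_wrt_rev)
  have "set (rev (filter (\<lambda>x. x < aa) mid)) = {w\<in>set vs. w < aa}"
    unfolding set_rev set_filter mid_facts(2) using ab by auto
  then have L': "filter (\<lambda>x. x < aa) mid = rev (sorted_list_of_set {w\<in>set vs. w < aa})"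
    using sorted_list_of_set_strict[OF L] by simp
  have "set (rev (filter (\<lambda>x. bb < x) mid)) = {w\<in>set vs. bb < w}"
    unfolding set_rev set_filter mid_facts(2) using ab by auto
  then have R': "filter (\<lambda>x. bb < x) mid = rev (sorted_list_of_set {w\<in>set vs. bb < w})"
    using sorted_list_of_set_strict[OF R] by simp
  show ?thesis using split L' R' by simp
qed

end


definition Layout :: "nat set \<Rightarrow> bool list \<Rightarrow> (nat set \<times> nat set set) set" where
  "Layout V fs = {(W, E'). W \<subseteq> V \<and> card W = length fs \<and> (V \<noteq> {} \<longrightarrow> Min V \<in> W) \<and>
     (\<forall>i<length fs. fs!i \<longrightarrow> gap V W (sorted_list_of_set W ! i) = {}) \<and>
     (\<exists>Eg. (\<forall>w\<in>W. Eg w \<in> validE (gap V W w)) \<and> E' = (\<Union>w\<in>W. Eg w))}"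

definition fsl :: "nat \<Rightarrow> nat \<Rightarrow> nat \<Rightarrow> bool list" where
  "fsl l p r = map (\<lambda>i. l \<le> i \<and> i \<le> l + p) [0..<l + p + r + 2]"

lemma fsl_length: "length (fsl l p r) = l + p + r + 2"
  unfolding fsl_def by simp

lemma fsl_nth: "i < l + p + r + 2 \<Longrightarrow> fsl l p r ! i \<longleftrightarrow> (l \<le> i \<and> i \<le> l + p)"
  unfolding fsl_def by (simp del: upt_Suc)

context
  fixes V :: "nat set" and E P vs
  assumes finV: "finite V" and val: "cvalidP V E P" and vsP: "vs \<in> P"
    and mV: "Min V \<in> set vs" and len2: "2 \<le> length vs"
begin

abbreviation "xa \<equiv> hd (ori vs)"
abbreviation "xb \<equiv> last (ori vs)"
abbreviation "xmid \<equiv> butlast (tl (ori vs))"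
abbreviation "xl \<equiv> card {w\<in>set vs. w < xa}"
abbreviation "xp \<equiv> card {w\<in>set vs. xa < w \<and> w < xb}"
abbreviation "xr \<equiv> card {w\<in>set vs. xb < w}"
abbreviation "xM \<equiv> {i. i < length xmid \<and> xa < xmid!i \<and> xmid!i < xb}"

lemmas mf = mid_facts[OF finV val vsP mV len2]
lemmas m1 = M1[OF finV val vsP mV len2]
lemmas m2 = M2[OF finV val vsP mV len2]

lemma len_mid: "length xmid = xl + xp + xr"
proof -
  have "length xmid = length (filter (\<lambda>x. xa < x \<and> x < xb) xmid) + length (filter (\<lambda>x. \<not> (xa < x \<and> x < xb)) xmid)"
    by (rule sum_length_filter_compl[symmetric])
  also have "\<dots> = xp + (xl + xr)" unfolding m1 m2 by simp
  finally show ?thesis by simp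
qed

lemma card_W: "card (set vs) = xl + xp + xr + 2"
  using len_mid mf(3) len2 distinct_card[OF vs_dist[OF finV val vsP mV len2]] by simp

lemma card_Msk: "card xM = xp"
proof -
  have "card xM = length (filter (\<lambda>x. xa < x \<and> x < xb) xmid)"
    by (simp add: length_filter_conv_card)
  also have "\<dots> = xp" unfolding m1 by simp
  finally show ?thesis .
qed

lemma Msk_sub: "xM \<subseteq> {0..<xl + xp + xr}"
  using len_mid by auto

lemma map_mid: "map (\<lambda>x. xa < x \<and> x < xb) xmid = map (\<lambda>i. i \<in> xM) [0..<length xmid]"
  by (rule nth_equalityI) auto

lemma aa_in: "xa \<in> set vs" and bb_in: "xb \<in> set vs"
  using ori_props(2,9)[OF finV val vsP mV len2] by (metis hd_in_set, metis last_in_set)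

lemma rank_a: "sorted_list_of_set (set vs) ! xl = xa"
  using rank_nth[of "set vs" xa] aa_in by simp

lemma rank_b: "sorted_list_of_set (set vs) ! (xl + xp + 1) = xb"
proof -
  have ab: "xa < xb" using mf(4) .
  have eq: "{w\<in>set vs. w < xb} = {w\<in>set vs. w < xa} \<union> ({xa} \<union> {w\<in>set vs. xa < w \<and> w < xb})"
    using ab aa_in by auto
  have "card {w\<in>set vs. w < xb} = xl + (1 + xp)"
    unfolding eq by (subst card_Un_disjoint; (auto)?)+
  then show ?thesis using rank_nth[of "set vs" xb] bb_in by simp
qed

lemma in_Layout: "(set vs, \<Union>ws\<in>P - {vs}. path_edges ws) \<in> Layout V (fsl xl xp xr)"
proof -
  define W where "W = set vs"
  have WV: "W \<subseteq> V" unfolding W_def using cvalid_setsub[OF val vsP] .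
  have cW: "card W = length (fsl xl xp xr)" unfolding W_def fsl_length card_W by simp
  have mW: "V \<noteq> {} \<longrightarrow> Min V \<in> W" unfolding W_def using mV by simp
  define sl where "sl = sorted_list_of_set W"
  have sls: "sorted_wrt (<) sl" unfolding sl_def by (simp add: strict_sorted_iff)
  have lsl: "length sl = xl + xp + xr + 2" unfolding sl_def W_def using card_W by simp
  have slm: "\<And>i j. i < j \<Longrightarrow> j < length sl \<Longrightarrow> sl!i < sl!j" using sls by (simp add: sorted_wrt_iff_nth_less)
  have ra: "sl ! xl = xa" using rank_a unfolding sl_def W_def .
  have rb: "sl ! (xl + xp + 1) = xb" using rank_b unfolding sl_def W_def .
  have forced: "\<forall>i<length (fsl xl xp xr). fsl xl xp xr ! i \<longrightarrow> gap V W (sl ! i) = {}"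
  proof (intro allI impI)
    fix i assume i: "i < length (fsl xl xp xr)" "fsl xl xp xr ! i"
    then have li: "xl \<le> i" "i \<le> xl + xp" using fsl_nth fsl_length by auto
    have ai: "xa \<le> sl ! i"
    proof (cases "xl = i")
      case True then show ?thesis using ra by simp
    next
      case False then have "xl < i" using li by simp
      moreover have "i < length sl" using i lsl fsl_length by simp
      ultimately show ?thesis using slm[of xl i] ra by simp
    qed
    have bi: "sl ! i < xb"
      using slm[of i "xl + xp + 1"] li lsl rb by simp
    show "gap V W (sl ! i) = {}"
    proof (rule ccontr)
      assume "gap V W (sl ! i) \<noteq> {}"
      then obtain v where v: "v \<in> gap V W (sl ! i)" by blast
      have "xb \<in> W" using bb_in W_def by simp
      then have "v \<in> V" "xa < v" "v < xb" using v ai bi unfolding gap_def by auto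
      then have "v \<in> W" using full[OF finV val vsP mV len2] W_def by auto
      moreover have "sl ! i \<in> W"
      proof -
        have "i < length sl" using i lsl fsl_length by simp
        then have "sl ! i \<in> set sl" by simp
        then show ?thesis unfolding sl_def W_def by simp
      qed
      ultimately show False using v gap_notin by blast
    qed
  qed
  define Eg where "Eg w = (\<Union>ws\<in>{ws\<in>P - {vs}. set ws \<subseteq> gap V W w}. path_edges ws)" for w
  have Egv: "\<forall>w\<in>W. Eg w \<in> validE (gap V W w)"
  proof
    fix w assume w: "w \<in> W"
    define Q where "Q = {ws\<in>P - {vs}. set ws \<subseteq> gap V W w}"
    have cQ: "cvalidP (\<Union>ws\<in>Q. set ws) (\<Union>ws\<in>Q. path_edges ws) Q"
      by (rule cvalid_restrict[OF val]) (auto simp: Q_def)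
    have "(\<Union>ws\<in>Q. set ws) = gap V W w"
    proof
      show "(\<Union>ws\<in>Q. set ws) \<subseteq> gap V W w" unfolding Q_def by blast
      show "gap V W w \<subseteq> (\<Union>ws\<in>Q. set ws)"
      proof
        fix v assume v: "v \<in> gap V W w"
        have vV: "v \<in> V" using v unfolding gap_def by blast
        have vW: "v \<notin> W" using gap_notin[OF v w] .
        obtain ws where ws: "ws \<in> P" "v \<in> set ws" using cvalid_cover[OF val vV] by blast
        have "ws \<noteq> vs" using ws vW W_def by blast
        then obtain w' where w': "w' \<in> set vs" "set ws \<subseteq> gap V (set vs) w'"
          using comp_in_gap[OF finV val vsP mV len2 ws(1)] by blast
        have "v \<in> gap V W w'" using w' ws W_def by blast
        then have "w' = w" using gap_unique[of v V W w' w] w' v w W_def by blast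
        then have "ws \<in> Q" using ws w' \<open>ws \<noteq> vs\<close> W_def unfolding Q_def by blast
        then show "v \<in> (\<Union>ws\<in>Q. set ws)" using ws by blast
      qed
    qed
    moreover have "Eg w = (\<Union>ws\<in>Q. path_edges ws)" unfolding Eg_def Q_def by (rule refl)
    ultimately have "cvalidP (gap V W w) (Eg w) Q" using cQ by simp
    then show "Eg w \<in> validE (gap V W w)" unfolding validE_def by blast
  qed
  have EE: "(\<Union>ws\<in>P - {vs}. path_edges ws) = (\<Union>w\<in>W. Eg w)"
  proof
    show "(\<Union>ws\<in>P - {vs}. path_edges ws) \<subseteq> (\<Union>w\<in>W. Eg w)"
    proof
      fix e assume "e \<in> (\<Union>ws\<in>P - {vs}. path_edges ws)"
      then obtain ws where ws: "ws \<in> P" "ws \<noteq> vs" "e \<in> path_edges ws" by blast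
      then obtain w' where w': "w' \<in> set vs" "set ws \<subseteq> gap V (set vs) w'"
        using comp_in_gap[OF finV val vsP mV len2 ws(1)] by blast
      then show "e \<in> (\<Union>w\<in>W. Eg w)" using ws W_def unfolding Eg_def by blast
    qed
    show "(\<Union>w\<in>W. Eg w) \<subseteq> (\<Union>ws\<in>P - {vs}. path_edges ws)" unfolding Eg_def by blast
  qed
  show ?thesis unfolding Layout_def
    using WV cW mW forced Egv EE unfolding W_def sl_def by blast
qed

end


definition aseq :: "nat \<Rightarrow> nat" where
  "aseq n = Sup {card (validE V) | V. finite V \<and> card V = n}"

lemma aseq_ge: "finite V \<Longrightarrow> card (validE V) \<le> aseq (card V)"
  unfolding aseq_def
proof (rule cSup_upper)
  assume "finite V"
  then show "card (validE V) \<in> {card (validE V') |V'. finite V' \<and> card V' = card V}" by blast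
  show "bdd_above {card (validE V') |V'. finite V' \<and> card V' = card V}"
  proof (rule bdd_aboveI)
    fix x assume "x \<in> {card (validE V') |V'. finite V' \<and> card V' = card V}"
    then obtain V' where "x = card (validE V')" "finite V'" "card V' = card V" by blast
    then show "x \<le> 2 ^ 2 ^ card V" using card_validE_le[of V'] by simp
  qed
qed

fun beta :: "bool list \<Rightarrow> nat \<Rightarrow> nat" where
  "beta [] m = (if m = 0 then 1 else 0)"
| "beta (True # fs) m = (if m = 0 then 0 else beta fs (m - 1))"
| "beta (False # fs) m = (\<Sum>g<m. aseq g * beta fs (m - 1 - g))"

lemma downclosed_take:
  fixes xs :: "nat list"
  assumes "sorted_wrt (<) xs" "S \<subseteq> set xs" "\<forall>s\<in>S. \<forall>y\<in>set xs. y < s \<longrightarrow> y \<in> S"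
  shows "S = set (take (card S) xs)"
  using assms
proof (induction xs arbitrary: S)
  case Nil then show ?case by simp
next
  case (Cons x xs)
  have sx: "\<forall>y\<in>set xs. x < y" and sxs: "sorted_wrt (<) xs" using Cons.prems(1) by simp_all
  show ?case
  proof (cases "S = {}")
    case True then show ?thesis by simp
  next
    case False
    then obtain s where s: "s \<in> S" by blast
    have xS: "x \<in> S"
    proof (cases "x = s")
      case True then show ?thesis using s by simp
    next
      case False
      have "s \<in> set (x # xs)" using s Cons.prems(2) by blast
      then have "s \<in> set xs" using False by simp
      then have "x < s" using sx by blast
      moreover have "x \<in> set (x # xs)" by simp
      ultimately show ?thesis using Cons.prems(3) s by blast
    qed
    have fS: "finite S" using Cons.prems(2) finite_subset by blast
    have A: "S - {x} \<subseteq> set xs" using Cons.prems(2) by auto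
    have B: "\<forall>s\<in>S - {x}. \<forall>y\<in>set xs. y < s \<longrightarrow> y \<in> S - {x}"
    proof (intro ballI impI)
      fix s y assume "s \<in> S - {x}" "y \<in> set xs" "y < s"
      moreover have "y \<noteq> x" using sx \<open>y \<in> set xs\<close> by blast
      ultimately show "y \<in> S - {x}" using Cons.prems(3) by auto
    qed
    have IH: "S - {x} = set (take (card (S - {x})) xs)"
      using Cons.IH[OF sxs A B] .
    have cS: "card S = Suc (card (S - {x}))" using card_Suc_Diff1[OF fS xS] by simp
    have "set (take (card S) (x # xs)) = insert x (set (take (card (S - {x})) xs))"
      unfolding cS by simp
    also have "\<dots> = insert x (S - {x})" using IH by simp
    also have "\<dots> = S" using xS by blast
    finally show ?thesis by simp
  qed
qed

lemma Layout_elim: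
  assumes "x \<in> Layout V fs"
  obtains W E' Eg where "x = (W, E')" "W \<subseteq> V" "card W = length fs" "V \<noteq> {} \<longrightarrow> Min V \<in> W"
    "\<forall>i<length fs. fs!i \<longrightarrow> gap V W (sorted_list_of_set W ! i) = {}"
    "\<forall>w\<in>W. Eg w \<in> validE (gap V W w)" "E' = (\<Union>w\<in>W. Eg w)"
  using assms unfolding Layout_def by blast

lemma Layout_Nil: "finite V \<Longrightarrow> card (Layout V []) \<le> beta [] (card V)"
proof -
  assume fV: "finite V"
  show ?thesis
  proof (cases "V = {}")
    case True
    have "Layout V [] \<subseteq> {({}, {})}"
    proof
      fix x assume "x \<in> Layout V []"
      then obtain W E' Eg where x: "x = (W, E')" "W \<subseteq> V" "E' = (\<Union>w\<in>W. Eg w)"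
        by (rule Layout_elim) blast
      then have "W = {}" using True by blast
      then show "x \<in> {({}, {})}" using x by simp
    qed
    then have "card (Layout V []) \<le> card {({}::nat set, {}::nat set set)}" by (rule card_mono[rotated]) simp
    then show ?thesis using True by simp
  next
    case False
    have "Layout V [] = {}"
    proof (rule ccontr)
      assume "Layout V [] \<noteq> {}"
      then obtain x where "x \<in> Layout V []" by blast
      then obtain W E' Eg where x0: "x = (W, E')" "W \<subseteq> V" "card W = length ([]::bool list)" "V \<noteq> {} \<longrightarrow> Min V \<in> W"
        by (rule Layout_elim)
      then have x: "W \<subseteq> V" "card W = 0" "Min V \<in> W" using False by auto
      have "finite W" using x(1) fV finite_subset by blast
      then show False using x by simp
    qed
    then show ?thesis by simp
  qed
qed

lemma finite_Layout: "finite V \<Longrightarrow> finite (Layout V fs)"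
proof -
  assume fV: "finite V"
  have "Layout V fs \<subseteq> Pow V \<times> Pow (Pow V)"
  proof
    fix x assume "x \<in> Layout V fs"
    then obtain W E' Eg where x: "x = (W, E')" "W \<subseteq> V" "\<forall>w\<in>W. Eg w \<in> validE (gap V W w)" "E' = (\<Union>w\<in>W. Eg w)"
      by (rule Layout_elim) blast
    have "\<forall>w\<in>W. Eg w \<subseteq> Pow V"
    proof
      fix w assume "w \<in> W"
      then have "Eg w \<subseteq> Pow (gap V W w)" using x(3) validE_Pow by blast
      moreover have "gap V W w \<subseteq> V" unfolding gap_def by blast
      ultimately show "Eg w \<subseteq> Pow V" by blast
    qed
    then show "x \<in> Pow V \<times> Pow (Pow V)" using x by blast
  qed
  then show ?thesis using fV by (meson finite_Pow_iff finite_SigmaI finite_subset)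
qed


lemma set_drop_distinct: "distinct xs \<Longrightarrow> set (drop g xs) = set xs - set (take g xs)"
proof -
  assume d: "distinct xs"
  have "set xs = set (take g xs) \<union> set (drop g xs)" by (metis append_take_drop_id set_append)
  moreover have "set (take g xs) \<inter> set (drop g xs) = {}" using set_take_disj_set_drop_if_distinct[OF d, of g g] by simp
  ultimately show ?thesis by blast
qed

lemma Layout_Cons_cover:
  assumes fV: "finite V" and ne: "V \<noteq> {}" and x: "x \<in> Layout V (f # fs)"
  defines "m \<equiv> Min V" and "xs \<equiv> sorted_list_of_set (V - {Min V})"
  shows "\<exists>g. g < card V \<and> (f \<longrightarrow> g = 0) \<and>
    x \<in> (\<lambda>(E0, (W', E'')). (insert m W', E0 \<union> E'')) ` (validE (set (take g xs)) \<times> Layout (set (drop g xs)) fs)"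
proof -
  obtain W E' Eg where W: "x = (W, E')" "W \<subseteq> V" "card W = length (f # fs)" "V \<noteq> {} \<longrightarrow> Min V \<in> W"
    "\<forall>i<length (f # fs). (f # fs)!i \<longrightarrow> gap V W (sorted_list_of_set W ! i) = {}"
    "\<forall>w\<in>W. Eg w \<in> validE (gap V W w)" "E' = (\<Union>w\<in>W. Eg w)"
    using x by (rule Layout_elim)
  have mW: "m \<in> W" using W(4) ne m_def by simp
  have mV: "m \<in> V" using mW W(2) by blast
  have mmin: "\<And>v. v \<in> V \<Longrightarrow> m \<le> v" using fV m_def by simp
  have fW: "finite W" using W(2) fV finite_subset by blast
  have MinW: "Min W = m"
  proof (rule antisym)
    show "Min W \<le> m" using fW mW by simp
    show "m \<le> Min W" using fW mW W(2) mmin by (metis Min_in empty_iff subsetD)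
  qed
  have sxs: "sorted_wrt (<) xs" and setxs: "set xs = V - {m}" and dxs: "distinct xs"
    using fV unfolding xs_def m_def by (simp_all add: strict_sorted_iff)
  have lxs: "length xs = card V - 1"
    using fV mV unfolding xs_def m_def by simp
  define G0 where "G0 = gap V W m"
  have G0sub: "G0 \<subseteq> set xs" unfolding G0_def gap_def setxs by auto
  have G0dc: "\<forall>s\<in>G0. \<forall>y\<in>set xs. y < s \<longrightarrow> y \<in> G0"
  proof (intro ballI impI)
    fix s y assume s: "s \<in> G0" and y: "y \<in> set xs" "y < s"
    have yV: "y \<in> V" "y \<noteq> m" using y setxs by auto
    then have "m < y" using mmin[of y] by simp
    moreover have "\<forall>w'\<in>W. m < w' \<longrightarrow> y < w'" using s y(2) unfolding G0_def gap_def by auto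
    ultimately show "y \<in> G0" using yV unfolding G0_def gap_def by blast
  qed
  define g where "g = card G0"
  have G0eq: "G0 = set (take g xs)" unfolding g_def by (rule downclosed_take[OF sxs G0sub G0dc])
  have gle: "g \<le> length xs" unfolding g_def using G0sub by (metis List.finite_set card_mono card_length order_trans)
  have glt: "g < card V" using gle lxs ne fV by (metis One_nat_def card_gt_0_iff diff_less le_less_trans less_numeral_extra(1) order_le_less)
  have sW: "sorted_list_of_set W = m # sorted_list_of_set (W - {m})"
    using sorted_list_of_set_nonempty[of W] fW mW MinW by auto
  have gf: "f \<longrightarrow> g = 0"
  proof
    assume f
    have "gap V W (sorted_list_of_set W ! 0) = {}" using W(5) \<open>f\<close> by auto
    then have "G0 = {}" unfolding G0_def sW by simp
    then show "g = 0" unfolding g_def by simp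
  qed
  define V' where "V' = set (drop g xs)"
  have V'eq: "V' = (V - {m}) - G0" unfolding V'_def G0eq using set_drop_distinct[OF dxs] setxs by simp
  define W' where "W' = W - {m}"
  have gap_eq: "\<And>w. w \<in> W' \<Longrightarrow> gap V' W' w = gap V W w"
  proof -
    fix w assume w: "w \<in> W'"
    have wW: "w \<in> W" "w \<noteq> m" using w W'_def by auto
    have mw: "m < w" using wW W(2) mmin[of w] by auto
    show "gap V' W' w = gap V W w"
    proof
      show "gap V' W' w \<subseteq> gap V W w"
      proof
        fix v assume v: "v \<in> gap V' W' w"
        have "v \<in> V" "w < v" using v V'eq unfolding gap_def by auto
        moreover have "\<forall>w'\<in>W. w < w' \<longrightarrow> v < w'"
        proof (intro ballI impI)
          fix w' assume "w' \<in> W" "w < w'"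
          then have "w' \<in> W'" using mw W'_def by auto
          then show "v < w'" using v \<open>w < w'\<close> unfolding gap_def by blast
        qed
        ultimately show "v \<in> gap V W w" unfolding gap_def by blast
      qed
      show "gap V W w \<subseteq> gap V' W' w"
      proof
        fix v assume v: "v \<in> gap V W w"
        have vV: "v \<in> V" "w < v" using v unfolding gap_def by auto
        have "v \<notin> G0"
        proof
          assume "v \<in> G0"
          then have "v < w" using wW(1) mw unfolding G0_def gap_def by blast
          then show False using vV by simp
        qed
        then have "v \<in> V'" using V'eq vV mw by auto
        moreover have "\<forall>w'\<in>W'. w < w' \<longrightarrow> v < w'" using v W'_def unfolding gap_def by blast
        ultimately show "v \<in> gap V' W' w" using vV unfolding gap_def by blast
      qed
    qed
  qed
  have W'V': "W' \<subseteq> V'"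
  proof
    fix w assume w: "w \<in> W'"
    then have "w \<in> V" "w \<noteq> m" using W(2) W'_def by auto
    moreover have "w \<notin> G0" using gap_notin[of w V W m] w mW W'_def unfolding G0_def by blast
    ultimately show "w \<in> V'" using V'eq by blast
  qed
  have cW': "card W' = length fs" using W(3) mW fW unfolding W'_def by simp
  have fV': "finite V'" unfolding V'_def by simp
  have minV': "V' \<noteq> {} \<longrightarrow> Min V' \<in> W'"
  proof
    assume V'ne: "V' \<noteq> {}"
    define u where "u = Min V'"
    have uV': "u \<in> V'" using Min_in[OF fV' V'ne] u_def by simp
    show "Min V' \<in> W'"
    proof (rule ccontr)
      assume "Min V' \<notin> W'"
      then have uW: "u \<notin> W" using uV' V'eq u_def W'_def by auto
      have uV: "u \<in> V" using uV' V'eq by auto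
      obtain w where w: "w \<in> W" "u \<in> gap V W w" using gap_cover[OF fW _ fV uV uW] W(4) ne by blast
      have "w \<noteq> m" using w(2) uV' V'eq unfolding G0_def by auto
      then have "w \<in> V'" using W'V' w(1) W'_def by auto
      then have "u \<le> w" using Min_le[OF fV'] u_def by simp
      moreover have "w < u" using w(2) unfolding gap_def by blast
      ultimately show False by simp
    qed
  qed
  have forced: "\<forall>i<length fs. fs!i \<longrightarrow> gap V' W' (sorted_list_of_set W' ! i) = {}"
  proof (intro allI impI)
    fix i assume i: "i < length fs" "fs ! i"
    have "gap V W (sorted_list_of_set W ! Suc i) = {}" using W(5) i by auto
    moreover have "sorted_list_of_set W ! Suc i = sorted_list_of_set W' ! i" unfolding sW W'_def by simp
    moreover have "sorted_list_of_set W' ! i \<in> W'"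
    proof -
      have "i < length (sorted_list_of_set W')" using i cW' by simp
      then have "sorted_list_of_set W' ! i \<in> set (sorted_list_of_set W')" by (rule nth_mem)
      then show ?thesis using fW unfolding W'_def by simp
    qed
    ultimately show "gap V' W' (sorted_list_of_set W' ! i) = {}" using gap_eq by simp
  qed
  have Eg': "\<forall>w\<in>W'. Eg w \<in> validE (gap V' W' w)" using W(6) gap_eq W'_def by auto
  have inL: "(W', \<Union>w\<in>W'. Eg w) \<in> Layout V' fs"
    unfolding Layout_def using W'V' cW' minV' forced Eg' by blast
  have in0: "Eg m \<in> validE (set (take g xs))" using W(6) mW G0eq unfolding G0_def by auto
  have xeq: "x = (insert m W', Eg m \<union> (\<Union>w\<in>W'. Eg w))"
    using W(1,7) mW W'_def by auto
  show ?thesis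
    using glt gf xeq in0 inL unfolding V'_def by (intro exI[of _ g]) force
qed


lemma Layout_empty_V: "V = {} \<Longrightarrow> Layout V (f # fs) = {}"
proof (rule ccontr)
  assume V: "V = {}" and "Layout V (f # fs) \<noteq> {}"
  then obtain x where "x \<in> Layout V (f # fs)" by blast
  then obtain W E' Eg where "W \<subseteq> V" "card W = length (f # fs)" by (rule Layout_elim)
  then show False using V by simp
qed

lemma Layout_bound: "finite V \<Longrightarrow> card (Layout V fs) \<le> beta fs (card V)"
proof (induction fs arbitrary: V)
  case Nil then show ?case by (rule Layout_Nil)
next
  case (Cons f fs)
  show ?case
  proof (cases "V = {}")
    case True then show ?thesis using Layout_empty_V by simp
  next
    case ne: False
    define m where "m = Min V"
    define xs where "xs = sorted_list_of_set (V - {Min V})"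
    define F where "F = (\<lambda>(E0::nat set set, (W'::nat set, E''::nat set set)). (insert m W', E0 \<union> E''))"
    define T where "T g = validE (set (take g xs)) \<times> Layout (set (drop g xs)) fs" for g
    define G where "G = (if f then {0} else {..<card V})"
    have fG: "finite G" unfolding G_def by auto
    have cover: "Layout V (f # fs) \<subseteq> (\<Union>g\<in>G. F ` T g)"
    proof
      fix x assume "x \<in> Layout V (f # fs)"
      from Layout_Cons_cover[OF Cons.prems ne this] obtain g where
        g: "g < card V" "f \<longrightarrow> g = 0" "x \<in> F ` T g"
        unfolding F_def T_def m_def xs_def by blast
      have "g \<in> G" using g unfolding G_def by auto
      then show "x \<in> (\<Union>g\<in>G. F ` T g)" using g by blast
    qed
    have lxs: "length xs = card V - 1" and dxs: "distinct xs"
      using Cons.prems ne unfolding xs_def by (simp_all add: Min_in)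
    have fT: "finite (T g)" for g unfolding T_def
      by (intro finite_cartesian_product finite_validE finite_Layout) simp_all
    have cT: "card (T g) \<le> aseq g * beta fs (card V - 1 - g)" if "g < card V" for g
    proof -
      have c1: "card (set (take g xs)) = g" using that lxs dxs by (simp add: distinct_card)
      have c2: "card (set (drop g xs)) = card V - 1 - g" using lxs dxs by (simp add: distinct_card)
      have "card (validE (set (take g xs))) \<le> aseq g" using aseq_ge[of "set (take g xs)"] c1 by simp
      moreover have "card (Layout (set (drop g xs)) fs) \<le> beta fs (card V - 1 - g)"
        using Cons.IH[of "set (drop g xs)"] c2 by simp
      ultimately show ?thesis unfolding T_def card_cartesian_product by (rule mult_le_mono)
    qed
    have "card (Layout V (f # fs)) \<le> card (\<Union>g\<in>G. F ` T g)"
      using cover fG fT by (intro card_mono) auto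
    also have "\<dots> \<le> (\<Sum>g\<in>G. card (F ` T g))" by (rule card_UN_le[OF fG])
    also have "\<dots> \<le> (\<Sum>g\<in>G. card (T g))" by (intro sum_mono card_image_le fT)
    also have "\<dots> \<le> (\<Sum>g\<in>G. aseq g * beta fs (card V - 1 - g))"
    proof (rule sum_mono)
      fix g assume "g \<in> G"
      moreover have "0 < card V" using ne Cons.prems card_gt_0_iff by blast
      ultimately have "g < card V" unfolding G_def by (cases f) auto
      then show "card (T g) \<le> aseq g * beta fs (card V - 1 - g)" by (rule cT)
    qed
    also have "\<dots> = beta (f # fs) (card V)"
    proof (cases f)
      case True
      have "aseq 0 = 1"
      proof -
        have "{card (validE V) |V. finite V \<and> card V = 0} = {1}"
        proof
          show "{card (validE V) |V. finite V \<and> card V = 0} \<subseteq> {1}"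
          proof
            fix c assume "c \<in> {card (validE V) |V. finite V \<and> card V = 0}"
            then obtain V0 where "c = card (validE V0)" "finite V0" "card V0 = 0" by blast
            then have "V0 = {}" "c = card (validE V0)" by auto
            then show "c \<in> {1}" using validE_empty by simp
          qed
          have "card (validE {}) = 1" using validE_empty by simp
          then show "{1} \<subseteq> {card (validE V) |V. finite V \<and> card V = 0}"
            by (intro subsetI) (metis (mono_tags, lifting) card.empty finite.emptyI mem_Collect_eq singletonD)
        qed
        then show ?thesis unfolding aseq_def by simp
      qed
      moreover have "card V \<noteq> 0" using ne Cons.prems by simp
      ultimately show ?thesis using True unfolding G_def by simp
    next
      case False
      then show ?thesis unfolding G_def by simp
    qed
    finally show ?thesis .
  qed
qed


definition Pof :: "nat set \<Rightarrow> nat set set \<Rightarrow> nat list set" where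
  "Pof V E = (SOME P. cvalidP V E P)"

definition mcomp :: "nat set \<Rightarrow> nat set set \<Rightarrow> nat list" where
  "mcomp V E = (SOME vs. vs \<in> Pof V E \<and> Min V \<in> set vs)"

definition params :: "nat set \<Rightarrow> nat set set \<Rightarrow> nat \<times> nat \<times> nat \<times> nat set" where
  "params V E = (let vs = mcomp V E; a = hd (ori vs); b = last (ori vs); W = set vs; mid = butlast (tl (ori vs))
     in (card {w\<in>W. w < a}, card {w\<in>W. a < w \<and> w < b}, card {w\<in>W. b < w},
         {i. i < length mid \<and> a < mid!i \<and> mid!i < b}))"

definition emb :: "nat set \<Rightarrow> nat set set \<Rightarrow> nat set \<times> nat set set" where
  "emb V E = (set (mcomp V E), \<Union>ws\<in>Pof V E - {mcomp V E}. path_edges ws)"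

definition Cls :: "nat set \<Rightarrow> nat \<Rightarrow> nat \<Rightarrow> nat \<Rightarrow> nat set \<Rightarrow> nat set set set" where
  "Cls V l p r M = {E\<in>validE V. 2 \<le> length (mcomp V E) \<and> params V E = (l, p, r, M)}"

lemma Pof_comp:
  assumes fV: "finite V" and ne: "V \<noteq> {}" and E: "E \<in> validE V"
  shows "cvalidP V E (Pof V E)" "mcomp V E \<in> Pof V E" "Min V \<in> set (mcomp V E)"
proof -
  show P: "cvalidP V E (Pof V E)" using E unfolding validE_def Pof_def by (metis (mono_tags) mem_Collect_eq someI)
  have "Min V \<in> V" using fV ne by simp
  then have "\<exists>vs. vs \<in> Pof V E \<and> Min V \<in> set vs" using cvalid_cover[OF P] by blast
  then have "mcomp V E \<in> Pof V E \<and> Min V \<in> set (mcomp V E)" unfolding mcomp_def by (rule someI_ex)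
  then show "mcomp V E \<in> Pof V E" "Min V \<in> set (mcomp V E)" by auto
qed

lemma E_split: "cvalidP V E P \<Longrightarrow> vs \<in> P \<Longrightarrow> E = path_edges vs \<union> (\<Union>ws\<in>P - {vs}. path_edges ws)"
  using cvalid_E by blast

lemma Cls_inj: assumes fV: "finite V" and ne: "V \<noteq> {}" shows "inj_on (emb V) (Cls V l p r M)"
proof (rule inj_onI)
  fix E1 E2 assume E1: "E1 \<in> Cls V l p r M" and E2: "E2 \<in> Cls V l p r M" and eq: "emb V E1 = emb V E2"
  define P1 where "P1 = Pof V E1"
  define P2 where "P2 = Pof V E2"
  define vs1 where "vs1 = mcomp V E1"
  define vs2 where "vs2 = mcomp V E2"
  have v1: "E1 \<in> validE V" "2 \<le> length vs1" "params V E1 = (l, p, r, M)" using E1 unfolding Cls_def vs1_def by auto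
  have v2: "E2 \<in> validE V" "2 \<le> length vs2" "params V E2 = (l, p, r, M)" using E2 unfolding Cls_def vs2_def by auto
  note c1 = Pof_comp[OF fV ne v1(1), folded P1_def vs1_def]
  note c2 = Pof_comp[OF fV ne v2(1), folded P2_def vs2_def]
  have W: "set vs1 = set vs2" and Rest: "(\<Union>ws\<in>P1 - {vs1}. path_edges ws) = (\<Union>ws\<in>P2 - {vs2}. path_edges ws)"
    using eq unfolding emb_def P1_def P2_def vs1_def vs2_def by auto
  define a1 where "a1 = hd (ori vs1)"
  define b1 where "b1 = last (ori vs1)"
  define a2 where "a2 = hd (ori vs2)"
  define b2 where "b2 = last (ori vs2)"
  define m1 where "m1 = butlast (tl (ori vs1))"
  define m2 where "m2 = butlast (tl (ori vs2))"
  have p1: "card {w\<in>set vs1. w < a1} = l" "card {w\<in>set vs1. a1 < w \<and> w < b1} = p" "card {w\<in>set vs1. b1 < w} = r"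
     "{i. i < length m1 \<and> a1 < m1!i \<and> m1!i < b1} = M"
    using v1(3) unfolding params_def a1_def b1_def m1_def vs1_def Let_def by auto
  have p2: "card {w\<in>set vs2. w < a2} = l" "card {w\<in>set vs2. a2 < w \<and> w < b2} = p" "card {w\<in>set vs2. b2 < w} = r"
     "{i. i < length m2 \<and> a2 < m2!i \<and> m2!i < b2} = M"
    using v2(3) unfolding params_def a2_def b2_def m2_def vs2_def Let_def by auto
  have "a1 = sorted_list_of_set (set vs1) ! l" using rank_a[OF fV c1 v1(2)] p1(1) a1_def by simp
  moreover have "a2 = sorted_list_of_set (set vs2) ! l" using rank_a[OF fV c2 v2(2)] p2(1) a2_def by simp
  ultimately have aeq: "a1 = a2" using W by simp
  have "b1 = sorted_list_of_set (set vs1) ! (l + p + 1)" using rank_b[OF fV c1 v1(2)] p1(1,2) b1_def a1_def by simp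
  moreover have "b2 = sorted_list_of_set (set vs2) ! (l + p + 1)" using rank_b[OF fV c2 v2(2)] p2(1,2) b2_def a2_def by simp
  ultimately have beq: "b1 = b2" using W by simp
  have lm: "length m1 = length m2"
    using len_mid[OF fV c1 v1(2)] len_mid[OF fV c2 v2(2)] p1 p2 unfolding m1_def m2_def a1_def a2_def b1_def b2_def by simp
  have map1: "map (\<lambda>x. a1 < x \<and> x < b1) m1 = map (\<lambda>i. i \<in> M) [0..<length m1]"
    using map_mid[OF fV c1 v1(2), folded m1_def a1_def b1_def, unfolded p1(4)] .
  have map2: "map (\<lambda>x. a2 < x \<and> x < b2) m2 = map (\<lambda>i. i \<in> M) [0..<length m2]"
    using map_mid[OF fV c2 v2(2), folded m2_def a2_def b2_def, unfolded p2(4)] .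
  have f1: "filter (\<lambda>x. a1 < x \<and> x < b1) m1 = sorted_list_of_set {w\<in>set vs1. a1 < w \<and> w < b1}"
    using M1[OF fV c1 v1(2)] unfolding m1_def a1_def b1_def .
  have f2: "filter (\<lambda>x. a2 < x \<and> x < b2) m2 = sorted_list_of_set {w\<in>set vs2. a2 < w \<and> w < b2}"
    using M1[OF fV c2 v2(2)] unfolding m2_def a2_def b2_def .
  have g1: "filter (\<lambda>x. \<not> (a1 < x \<and> x < b1)) m1 =
     rev (sorted_list_of_set {w\<in>set vs1. w < a1}) @ rev (sorted_list_of_set {w\<in>set vs1. b1 < w})"
    using M2[OF fV c1 v1(2)] unfolding m1_def a1_def b1_def .
  have g2: "filter (\<lambda>x. \<not> (a2 < x \<and> x < b2)) m2 =
     rev (sorted_list_of_set {w\<in>set vs2. w < a2}) @ rev (sorted_list_of_set {w\<in>set vs2. b2 < w})"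
    using M2[OF fV c2 v2(2)] unfolding m2_def a2_def b2_def .
  have meq: "m1 = m2"
    by (rule list_determined[of "\<lambda>x. a1 < x \<and> x < b1"]) (use map1 map2 f1 f2 g1 g2 lm aeq beq W in simp_all)
  have "ori vs1 = ori vs2"
    using vd_decomp[OF fV c1 v1(2)] vd_decomp[OF fV c2 v2(2)] meq aeq beq
    unfolding m1_def m2_def a1_def a2_def b1_def b2_def by metis
  then have "path_edges vs1 = path_edges vs2"
    using ori_props(4)[OF fV c1 v1(2)] ori_props(4)[OF fV c2 v2(2)] by simp
  then show "E1 = E2"
    using E_split[OF c1(1) c1(2)] E_split[OF c2(1) c2(2)] Rest by simp
qed

lemma Cls_sub: assumes fV: "finite V" and ne: "V \<noteq> {}"
  shows "emb V ` Cls V l p r M \<subseteq> Layout V (fsl l p r)"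
proof
  fix x assume "x \<in> emb V ` Cls V l p r M"
  then obtain E where E: "E \<in> Cls V l p r M" "x = emb V E" by blast
  have v: "E \<in> validE V" "2 \<le> length (mcomp V E)" "params V E = (l, p, r, M)" using E unfolding Cls_def by auto
  note c = Pof_comp[OF fV ne v(1)]
  have "(set (mcomp V E), \<Union>ws\<in>Pof V E - {mcomp V E}. path_edges ws) \<in>
     Layout V (fsl (card {w\<in>set (mcomp V E). w < hd (ori (mcomp V E))})
       (card {w\<in>set (mcomp V E). hd (ori (mcomp V E)) < w \<and> w < last (ori (mcomp V E))})
       (card {w\<in>set (mcomp V E). last (ori (mcomp V E)) < w}))"
    by (rule in_Layout[OF fV c v(2)])
  moreover have "card {w\<in>set (mcomp V E). w < hd (ori (mcomp V E))} = l"
      "card {w\<in>set (mcomp V E). hd (ori (mcomp V E)) < w \<and> w < last (ori (mcomp V E))} = p"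
      "card {w\<in>set (mcomp V E). last (ori (mcomp V E)) < w} = r"
    using v(3) unfolding params_def Let_def by auto
  ultimately show "x \<in> Layout V (fsl l p r)" using E(2) unfolding emb_def by simp
qed


lemma singleton_case:
  assumes fV: "finite V" and ne: "V \<noteq> {}" and E: "E \<in> validE V" and l: "\<not> 2 \<le> length (mcomp V E)"
  shows "E \<in> validE (V - {Min V})"
proof -
  note c = Pof_comp[OF fV ne E]
  define P where "P = Pof V E"
  define vs where "vs = mcomp V E"
  have cv: "cvalidP V E P" and vsP: "vs \<in> P" and mv: "Min V \<in> set vs" using c P_def vs_def by auto
  have "vs \<noteq> []" using cvalid_distinct[OF cv vsP] by simp
  moreover have "length vs < 2" using l vs_def by simp
  ultimately have "length vs = 1" by (cases vs) auto
  then obtain x where "vs = [x]" by (metis One_nat_def length_0_conv length_Suc_conv)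
  then have vs1: "vs = [Min V]" using mv by simp
  define Q where "Q = P - {vs}"
  have cQ: "cvalidP (\<Union>ws\<in>Q. set ws) (\<Union>ws\<in>Q. path_edges ws) Q"
    by (rule cvalid_restrict[OF cv]) (auto simp: Q_def)
  have S: "(\<Union>ws\<in>Q. set ws) = V - {Min V}"
  proof
    show "(\<Union>ws\<in>Q. set ws) \<subseteq> V - {Min V}"
    proof
      fix v assume "v \<in> (\<Union>ws\<in>Q. set ws)"
      then obtain ws where ws: "ws \<in> P" "ws \<noteq> vs" "v \<in> set ws" unfolding Q_def by blast
      have "v \<in> V" using cvalid_setsub[OF cv ws(1)] ws(3) by blast
      moreover have "v \<noteq> Min V" using cvalid_disj[OF cv vsP ws(1)] ws(2,3) mv by blast
      ultimately show "v \<in> V - {Min V}" by blast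
    qed
    show "V - {Min V} \<subseteq> (\<Union>ws\<in>Q. set ws)"
    proof
      fix v assume v: "v \<in> V - {Min V}"
      then obtain ws where ws: "ws \<in> P" "v \<in> set ws" using cvalid_cover[OF cv] by blast
      have "ws \<noteq> vs" using ws v vs1 by auto
      then show "v \<in> (\<Union>ws\<in>Q. set ws)" using ws unfolding Q_def by blast
    qed
  qed
  have "path_edges vs = {}" unfolding vs1 path_edges_def by simp
  then have EE: "(\<Union>ws\<in>Q. path_edges ws) = E" using E_split[OF cv vsP] unfolding Q_def by simp
  show ?thesis using cQ unfolding S EE validE_def by blast
qed

lemma card_validE_bound:
  assumes fV: "finite V" and ne: "V \<noteq> {}"
  shows "card (validE V) \<le> aseq (card V - 1) +
    (\<Sum>l\<le>card V. \<Sum>p\<le>card V. \<Sum>r\<le>card V. ((l + p + r) choose p) * beta (fsl l p r) (card V))"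
proof -
  define n where "n = card V"
  define Ms where "Ms l p r = {M. M \<subseteq> {0..<l + p + r} \<and> card M = p}" for l p r :: nat
  define U where "U = (\<Union>l\<in>{..n}. \<Union>p\<in>{..n}. \<Union>r\<in>{..n}. \<Union>M\<in>Ms l p r. Cls V l p r M)"
  have fMs: "finite (Ms l p r)" for l p r unfolding Ms_def by (rule finite_subset[of _ "Pow {0..<l+p+r}"]) auto
  have cMs: "card (Ms l p r) = (l + p + r) choose p" for l p r unfolding Ms_def using n_subsets[of "{0..<l+p+r}" p] by simp
  have cover: "validE V \<subseteq> validE (V - {Min V}) \<union> U"
  proof
    fix E assume E: "E \<in> validE V"
    show "E \<in> validE (V - {Min V}) \<union> U"
    proof (cases "2 \<le> length (mcomp V E)")
      case False then show ?thesis using singleton_case[OF fV ne E] by blast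
    next
      case True
      note c = Pof_comp[OF fV ne E]
      obtain l p r M where pr: "params V E = (l, p, r, M)" by (metis prod_cases4)
      have ps: "card {w\<in>set (mcomp V E). w < hd (ori (mcomp V E))} = l"
        "card {w\<in>set (mcomp V E). hd (ori (mcomp V E)) < w \<and> w < last (ori (mcomp V E))} = p"
        "card {w\<in>set (mcomp V E). last (ori (mcomp V E)) < w} = r"
        "{i. i < length (butlast (tl (ori (mcomp V E)))) \<and> hd (ori (mcomp V E)) < butlast (tl (ori (mcomp V E)))!i
            \<and> butlast (tl (ori (mcomp V E)))!i < last (ori (mcomp V E))} = M"
        using pr unfolding params_def Let_def by auto
      have cW: "card (set (mcomp V E)) = l + p + r + 2" using card_W[OF fV c True] ps by simp
      have "card (set (mcomp V E)) \<le> n" unfolding n_def using cvalid_setsub[OF c(1) c(2)] fV by (simp add: card_mono)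
      then have lpr: "l \<le> n" "p \<le> n" "r \<le> n" using cW by auto
      have "M \<in> Ms l p r" using card_Msk[OF fV c True] Msk_sub[OF fV c True] ps unfolding Ms_def by simp
      moreover have "E \<in> Cls V l p r M" unfolding Cls_def using E True pr by simp
      ultimately have "E \<in> U" unfolding U_def using lpr by blast
      then show ?thesis by blast
    qed
  qed
  have fVm: "finite (V - {Min V})" using fV by simp
  have cVm: "card (V - {Min V}) = n - 1" unfolding n_def using fV ne by simp
  have cCls: "card (Cls V l p r M) \<le> beta (fsl l p r) n" for l p r M
  proof -
    have "card (Cls V l p r M) = card (emb V ` Cls V l p r M)" using card_image[OF Cls_inj[OF fV ne]] by simp
    also have "\<dots> \<le> card (Layout V (fsl l p r))" by (rule card_mono[OF finite_Layout[OF fV] Cls_sub[OF fV ne]])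
    also have "\<dots> \<le> beta (fsl l p r) n" unfolding n_def by (rule Layout_bound[OF fV])
    finally show ?thesis .
  qed
  have "card U \<le> (\<Sum>l\<le>n. \<Sum>p\<le>n. \<Sum>r\<le>n. \<Sum>M\<in>Ms l p r. card (Cls V l p r M))"
  proof -
    have "card U \<le> (\<Sum>l\<le>n. card (\<Union>p\<in>{..n}. \<Union>r\<in>{..n}. \<Union>M\<in>Ms l p r. Cls V l p r M))"
      unfolding U_def by (rule card_UN_le) simp
    also have "\<dots> \<le> (\<Sum>l\<le>n. \<Sum>p\<le>n. card (\<Union>r\<in>{..n}. \<Union>M\<in>Ms l p r. Cls V l p r M))"
      by (intro sum_mono card_UN_le) simp
    also have "\<dots> \<le> (\<Sum>l\<le>n. \<Sum>p\<le>n. \<Sum>r\<le>n. card (\<Union>M\<in>Ms l p r. Cls V l p r M))"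
      by (intro sum_mono card_UN_le) simp
    also have "\<dots> \<le> (\<Sum>l\<le>n. \<Sum>p\<le>n. \<Sum>r\<le>n. \<Sum>M\<in>Ms l p r. card (Cls V l p r M))"
      by (intro sum_mono card_UN_le fMs)
    finally show ?thesis .
  qed
  also have "\<dots> \<le> (\<Sum>l\<le>n. \<Sum>p\<le>n. \<Sum>r\<le>n. \<Sum>M\<in>Ms l p r. beta (fsl l p r) n)"
    by (intro sum_mono cCls)
  also have "\<dots> = (\<Sum>l\<le>n. \<Sum>p\<le>n. \<Sum>r\<le>n. ((l + p + r) choose p) * beta (fsl l p r) n)"
    using cMs by simp
  finally have cU: "card U \<le> (\<Sum>l\<le>n. \<Sum>p\<le>n. \<Sum>r\<le>n. ((l + p + r) choose p) * beta (fsl l p r) n)" .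
  have "U \<subseteq> validE V" unfolding U_def Cls_def by blast
  then have fU: "finite U" using finite_validE[OF fV] finite_subset by blast
  have "card (validE V) \<le> card (validE (V - {Min V}) \<union> U)"
    by (rule card_mono) (use finite_validE[OF fVm] fU cover in auto)
  also have "\<dots> \<le> card (validE (V - {Min V})) + card U" by (rule card_Un_le)
  also have "\<dots> \<le> aseq (n - 1) + card U" using aseq_ge[OF fVm] cVm by simp
  finally show ?thesis using cU unfolding n_def by simp
qed


lemma cauchy_le:
  fixes f h :: "nat \<Rightarrow> real"
  assumes f0: "\<And>i. 0 \<le> f i" and h0: "\<And>i. 0 \<le> h i"
  shows "(\<Sum>k\<le>K. \<Sum>i\<le>k. f i * h (k - i)) \<le> (\<Sum>i\<le>K. f i) * (\<Sum>j\<le>K. h j)"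
proof -
  have "(\<Sum>k\<le>K. \<Sum>i\<le>k. f i * h (k - i)) = (\<Sum>(i,j)\<in>{(i,j). i + j \<le> K}. f i * h j)"
    by (rule sum.triangle_reindex_eq[symmetric])
  also have "\<dots> \<le> (\<Sum>(i,j)\<in>{..K} \<times> {..K}. f i * h j)"
    by (rule sum_mono2) (auto intro: mult_nonneg_nonneg f0 h0)
  also have "\<dots> = (\<Sum>i\<le>K. f i) * (\<Sum>j\<le>K. h j)"
    by (simp add: sum_product sum.cartesian_product)
  finally show ?thesis .
qed

lemma geom_le:
  fixes x :: real
  assumes "0 \<le> x" "x < 1"
  shows "(\<Sum>i\<le>K. x^i) \<le> 1 / (1 - x)"
proof -
  have "(1 - x) * (\<Sum>i\<le>K. x^i) = 1 - x^Suc K" by (rule sum_gp_basic)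
  also have "\<dots> \<le> 1" using assms by simp
  finally have "(1 - x) * (\<Sum>i\<le>K. x^i) \<le> 1" .
  then show ?thesis using assms by (simp add: field_simps)
qed

lemma binom_le:
  fixes x :: real
  assumes x: "0 \<le> x" "x < 1"
  shows "(\<Sum>p\<le>K. real ((q + p) choose p) * x^p) \<le> (1 / (1 - x))^(Suc q)"
proof (induction q arbitrary: K)
  case 0
  then show ?case using geom_le[OF x, of K] by simp
next
  case (Suc q)
  have "(\<Sum>p\<le>K. real ((Suc q + p) choose p) * x^p) = (\<Sum>p\<le>K. \<Sum>i\<le>p. (real ((q + i) choose i) * x^i) * x^(p - i))"
  proof (rule sum.cong[OF refl])
    fix p assume "p \<in> {..K}"
    have "real ((Suc q + p) choose p) = (\<Sum>i\<le>p. real ((q + i) choose i))"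
      using sum_choose_lower[of q p] by (simp flip: of_nat_sum)
    then have "real ((Suc q + p) choose p) * x^p = (\<Sum>i\<le>p. real ((q + i) choose i) * x^p)"
      by (simp add: sum_distrib_right)
    also have "\<dots> = (\<Sum>i\<le>p. (real ((q + i) choose i) * x^i) * x^(p - i))"
      by (rule sum.cong[OF refl]) (simp add: mult.assoc power_add[symmetric])
    finally show "real ((Suc q + p) choose p) * x^p = (\<Sum>i\<le>p. (real ((q + i) choose i) * x^i) * x^(p - i))" .
  qed
  also have "\<dots> \<le> (\<Sum>i\<le>K. real ((q + i) choose i) * x^i) * (\<Sum>j\<le>K. x^j)"
    by (rule cauchy_le) (use x in auto)
  also have "\<dots> \<le> (1 / (1 - x))^(Suc q) * (1 / (1 - x))"
    by (rule mult_mono[OF Suc.IH geom_le[OF x]]) (use x in \<open>auto intro!: sum_nonneg\<close>)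
  finally show ?case by (simp add: field_simps)
qed

lemma double_geom_le:
  fixes u :: real
  assumes "0 \<le> u" "u < 1"
  shows "(\<Sum>l\<le>K. \<Sum>r\<le>K. u^l * u^r) \<le> 1 / (1 - u)^2"
proof -
  have "(\<Sum>l\<le>K. \<Sum>r\<le>K. u^l * u^r) = (\<Sum>l\<le>K. u^l) * (\<Sum>r\<le>K. u^r)"
    by (simp add: sum_product)
  also have "\<dots> \<le> (1 / (1 - u)) * (1 / (1 - u))"
    by (rule mult_mono[OF geom_le geom_le]) (use assms in \<open>auto intro!: sum_nonneg\<close>)
  finally show ?thesis by (simp add: power2_eq_square)
qed


definition Tser :: "real \<Rightarrow> nat \<Rightarrow> real" where
  "Tser x N = (\<Sum>n\<le>N. real (aseq n) * x^n)"

definition nfree :: "bool list \<Rightarrow> nat" where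
  "nfree fs = length (filter (\<lambda>b. \<not> b) fs)"

lemma Tser_nonneg: "0 \<le> x \<Longrightarrow> 0 \<le> Tser x N"
  unfolding Tser_def by (intro sum_nonneg) simp

lemma Tser_mono: "0 \<le> x \<Longrightarrow> N \<le> N' \<Longrightarrow> Tser x N \<le> Tser x N'"
  unfolding Tser_def by (rule sum_mono2) auto

lemma beta_gf:
  fixes x :: real
  assumes x: "0 \<le> x"
  shows "(\<Sum>m\<le>M. real (beta fs m) * x^m) \<le> x^(length fs) * (Tser x (M - 1))^(nfree fs)"
proof (induction fs arbitrary: M)
  case Nil
  have "(\<Sum>m\<le>M. real (beta [] m) * x^m) = (\<Sum>m\<in>{0}. real (beta [] m) * x^m)"
    by (rule sum.mono_neutral_right) auto
  then show ?case by (simp add: nfree_def)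
next
  case (Cons f fs)
  have T0: "0 \<le> Tser x N" for N using Tser_nonneg[OF x] .
  show ?case
  proof (cases M)
    case 0
    have "beta (f # fs) 0 = 0" by (cases f) auto
    then show ?thesis using 0 T0 x by simp
  next
    case (Suc K)
    show ?thesis
    proof (cases f)
      case True
      have "(\<Sum>m\<le>M. real (beta (f # fs) m) * x^m) = real (beta (f # fs) 0) * x^0 + (\<Sum>m\<le>K. real (beta (f # fs) (Suc m)) * x^(Suc m))"
        unfolding Suc by (rule sum.atMost_Suc_shift)
      also have "\<dots> = x * (\<Sum>m\<le>K. real (beta fs m) * x^m)"
        using True by (simp add: sum_distrib_left mult_ac)
      also have "\<dots> \<le> x * (x^(length fs) * (Tser x (K - 1))^(nfree fs))"
        using Cons.IH[of K] x by (simp add: mult_left_mono)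
      also have "\<dots> \<le> x * (x^(length fs) * (Tser x K)^(nfree fs))"
        using Tser_mono[OF x, of "K - 1" K] T0 x
        by (intro mult_left_mono power_mono) (auto simp: zero_le_power)
      also have "\<dots> = x^(length (f # fs)) * (Tser x (M - 1))^(nfree (f # fs))"
        using True Suc by (simp add: nfree_def)
      finally show ?thesis .
    next
      case False
      have "(\<Sum>m\<le>M. real (beta (f # fs) m) * x^m) = real (beta (f # fs) 0) * x^0 + (\<Sum>m\<le>K. real (beta (f # fs) (Suc m)) * x^(Suc m))"
        unfolding Suc by (rule sum.atMost_Suc_shift)
      also have "\<dots> = x * (\<Sum>k\<le>K. \<Sum>g\<le>k. (real (aseq g) * x^g) * (real (beta fs (k - g)) * x^(k - g)))"
      proof -
        have "real (beta (f # fs) (Suc m)) * x^(Suc m) = x * (\<Sum>g\<le>m. (real (aseq g) * x^g) * (real (beta fs (m - g)) * x^(m - g)))" for m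
        proof -
          have "real (beta (f # fs) (Suc m)) = (\<Sum>g\<le>m. real (aseq g) * real (beta fs (m - g)))"
            using False by (simp add: lessThan_Suc_atMost)
          then have "real (beta (f # fs) (Suc m)) * x^(Suc m) = (\<Sum>g\<le>m. real (aseq g) * real (beta fs (m - g)) * x^(Suc m))"
            by (simp add: sum_distrib_right)
          also have "\<dots> = (\<Sum>g\<le>m. x * ((real (aseq g) * x^g) * (real (beta fs (m - g)) * x^(m - g))))"
          proof (rule sum.cong[OF refl])
            fix g assume "g \<in> {..m}"
            then have "x^(Suc m) = x * (x^g * x^(m - g))" by (simp add: power_add[symmetric])
            then show "real (aseq g) * real (beta fs (m - g)) * x^(Suc m) = x * ((real (aseq g) * x^g) * (real (beta fs (m - g)) * x^(m - g)))"
              by (simp add: mult_ac; blast)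
          qed
          finally show ?thesis by (simp add: sum_distrib_left)
        qed
        then show ?thesis using False by (simp add: sum_distrib_left)
      qed
      also have "\<dots> \<le> x * ((\<Sum>g\<le>K. real (aseq g) * x^g) * (\<Sum>j\<le>K. real (beta fs j) * x^j))"
        by (rule mult_left_mono[OF cauchy_le x]) (use x in auto)
      also have "\<dots> \<le> x * (Tser x K * (x^(length fs) * (Tser x (K - 1))^(nfree fs)))"
        using Cons.IH[of K] x T0 unfolding Tser_def
        by (intro mult_left_mono) (auto intro!: mult_left_mono sum_nonneg)
      also have "\<dots> \<le> x * (Tser x K * (x^(length fs) * (Tser x K)^(nfree fs)))"
        using Tser_mono[OF x, of "K - 1" K] T0 x
        by (intro mult_left_mono power_mono) (auto simp: zero_le_power)
      also have "\<dots> = x^(length (f # fs)) * (Tser x (M - 1))^(nfree (f # fs))"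
        using False Suc by (simp add: nfree_def mult_ac)
      finally show ?thesis .
    qed
  qed
qed


lemma aseq0: "aseq 0 = 1"
proof -
  have "{card (validE V) |V. finite V \<and> card V = 0} = {1}"
  proof
    show "{card (validE V) |V. finite V \<and> card V = 0} \<subseteq> {1}"
    proof
      fix c assume "c \<in> {card (validE V) |V. finite V \<and> card V = 0}"
      then obtain V0 where "c = card (validE V0)" "finite V0" "card V0 = 0" by blast
      then have "V0 = {}" "c = card (validE V0)" by auto
      then show "c \<in> {1}" using validE_empty by simp
    qed
    have "card (validE {}) = 1" using validE_empty by simp
    then show "{1} \<subseteq> {card (validE V) |V. finite V \<and> card V = 0}"
      by (intro subsetI) (metis (mono_tags, lifting) card.empty finite.emptyI mem_Collect_eq singletonD)
  qed
  then show ?thesis unfolding aseq_def by simp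
qed

definition Rn :: "nat \<Rightarrow> nat \<Rightarrow> nat" where
  "Rn K n = (\<Sum>l\<le>K. \<Sum>p\<le>K. \<Sum>r\<le>K. ((l + p + r) choose p) * beta (fsl l p r) n)"

lemma aseq_rec: "1 \<le> n \<Longrightarrow> aseq n \<le> aseq (n - 1) + Rn n n"
  unfolding aseq_def[of n] Rn_def
proof (rule cSup_least)
  assume n: "1 \<le> n"
  show "{card (validE V) |V. finite V \<and> card V = n} \<noteq> {}"
    by (rule ccontr) (use card_atLeastLessThan[of 0 n] in \<open>auto\<close>)
  fix c assume "c \<in> {card (validE V) |V. finite V \<and> card V = n}"
  then obtain V where V: "c = card (validE V)" "finite V" "card V = n" by blast
  have ne: "V \<noteq> {}" using V n by auto
  show "c \<le> aseq (n - 1) + (\<Sum>l\<le>n. \<Sum>p\<le>n. \<Sum>r\<le>n. ((l + p + r) choose p) * beta (fsl l p r) n)"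
    using card_validE_bound[OF V(2) ne] V by simp
qed

lemma fsl_nfree: "nfree (fsl l p r) = l + r + 1"
proof -
  define f where "f = (\<lambda>i. l \<le> i \<and> i \<le> l + p)"
  have u1: "[0..<l + (p + r + 2)] = [0..<l] @ [l..<l + (p + r + 2)]" by (rule upt_add_eq_append) simp
  have u2: "[l..<(l + p + 1) + (r + 1)] = [l..<l + p + 1] @ [l + p + 1..<(l + p + 1) + (r + 1)]"
    by (rule upt_add_eq_append) simp
  have e1: "l + p + r + 2 = l + (p + r + 2)" by simp
  have e2: "l + (p + r + 2) = (l + p + 1) + (r + 1)" by simp
  have u: "[0..<l + p + r + 2] = [0..<l] @ [l..<l + p + 1] @ [l + p + 1..<l + p + r + 2]"
    by (simp only: e1 u1, simp only: e2 u2)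
  have A: "filter (Not \<circ> f) [0..<l] = [0..<l]" by (rule filter_True) (auto simp: f_def)
  have B: "filter (Not \<circ> f) [l..<l + p + 1] = []" by (rule filter_False) (auto simp: f_def)
  have C: "filter (Not \<circ> f) [l + p + 1..<l + p + r + 2] = [l + p + 1..<l + p + r + 2]"
    by (rule filter_True) (auto simp: f_def)
  have "filter (Not \<circ> f) [0..<l + p + r + 2] = [0..<l] @ [l + p + 1..<l + p + r + 2]"
    unfolding u filter_append A B C by (simp del: upt_Suc)
  then have "length (filter (Not \<circ> f) [0..<l + p + r + 2]) = l + r + 1" by (simp del: upt_Suc)
  moreover have "nfree (fsl l p r) = length (filter (Not \<circ> f) [0..<l + p + r + 2])"
    unfolding nfree_def fsl_def f_def[symmetric] filter_map length_map by (rule refl)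
  ultimately show ?thesis by simp
qed

lemma Rn_mono: "K \<le> K' \<Longrightarrow> Rn K n \<le> Rn K' n"
proof -
  assume K: "K \<le> K'"
  define g where "g l p r = ((l + p + r) choose p) * beta (fsl l p r) n" for l p r
  have s: "\<And>h :: nat \<Rightarrow> nat. (\<Sum>i\<le>K. h i) \<le> (\<Sum>i\<le>K'. h i)"
    using K by (intro sum_mono2) auto
  have "(\<Sum>l\<le>K. \<Sum>p\<le>K. \<Sum>r\<le>K. g l p r) \<le> (\<Sum>l\<le>K. \<Sum>p\<le>K. \<Sum>r\<le>K'. g l p r)"
    by (intro sum_mono s)
  also have "\<dots> \<le> (\<Sum>l\<le>K. \<Sum>p\<le>K'. \<Sum>r\<le>K'. g l p r)"
    by (intro sum_mono s)
  also have "\<dots> \<le> (\<Sum>l\<le>K'. \<Sum>p\<le>K'. \<Sum>r\<le>K'. g l p r)"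
    by (rule s)
  finally show ?thesis unfolding Rn_def g_def .
qed


lemma rearr:
  fixes x t :: real
  assumes x: "0 \<le> x" "x < 1" and t: "0 \<le> t" and U: "x * t / (1 - x) < 1"
  shows "(\<Sum>l\<le>K. \<Sum>p\<le>K. \<Sum>r\<le>K. real ((l + p + r) choose p) * (x^(l + p + r + 2) * t^(l + r + 1)))
     \<le> x^2 * t / ((1 - x) * (1 - x * t / (1 - x))^2)"
proof -
  define u where "u = x * t / (1 - x)"
  have u0: "0 \<le> u" unfolding u_def using x t by simp
  define c where "c = x^2 * t"
  have c0: "0 \<le> c" unfolding c_def using x t by simp
  have "(\<Sum>l\<le>K. \<Sum>p\<le>K. \<Sum>r\<le>K. real ((l + p + r) choose p) * (x^(l + p + r + 2) * t^(l + r + 1)))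
      = (\<Sum>l\<le>K. \<Sum>r\<le>K. \<Sum>p\<le>K. (c * ((x*t)^l * (x*t)^r)) * (real ((l + p + r) choose p) * x^p))"
  proof -
    have "(\<Sum>l\<le>K. \<Sum>p\<le>K. \<Sum>r\<le>K. real ((l + p + r) choose p) * (x^(l + p + r + 2) * t^(l + r + 1)))
      = (\<Sum>l\<le>K. \<Sum>r\<le>K. \<Sum>p\<le>K. real ((l + p + r) choose p) * (x^(l + p + r + 2) * t^(l + r + 1)))"
      by (rule sum.cong[OF refl], rule sum.swap)
    also have "\<dots> = (\<Sum>l\<le>K. \<Sum>r\<le>K. \<Sum>p\<le>K. (c * ((x*t)^l * (x*t)^r)) * (real ((l + p + r) choose p) * x^p))"
    proof (intro sum.cong refl)
      fix l r p :: nat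
      show "real ((l + p + r) choose p) * (x^(l + p + r + 2) * t^(l + r + 1)) =
          (c * ((x*t)^l * (x*t)^r)) * (real ((l + p + r) choose p) * x^p)"
        unfolding c_def by (simp add: power_add power_mult_distrib mult_ac power2_eq_square)
    qed
    finally show ?thesis .
  qed
  also have "\<dots> \<le> (\<Sum>l\<le>K. \<Sum>r\<le>K. (c * ((x*t)^l * (x*t)^r)) * (1 / (1 - x))^(Suc (l + r)))"
  proof (intro sum_mono)
    fix l r :: nat
    have "(\<Sum>p\<le>K. (c * ((x*t)^l * (x*t)^r)) * (real ((l + p + r) choose p) * x^p))
       = (c * ((x*t)^l * (x*t)^r)) * (\<Sum>p\<le>K. real ((l + p + r) choose p) * x^p)"
      by (simp add: sum_distrib_left)
    also have "\<dots> = (c * ((x*t)^l * (x*t)^r)) * (\<Sum>p\<le>K. real (((l + r) + p) choose p) * x^p)"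
    proof -
      have "(\<Sum>p\<le>K. real ((l + p + r) choose p) * x^p) = (\<Sum>p\<le>K. real (((l + r) + p) choose p) * x^p)"
      proof (rule sum.cong[OF refl])
        fix p assume "p \<in> {..K}"
        have "l + p + r = (l + r) + p" by linarith
        then show "real ((l + p + r) choose p) * x^p = real (((l + r) + p) choose p) * x^p" by (simp only:)
      qed
      then show ?thesis by simp
    qed
    also have "\<dots> \<le> (c * ((x*t)^l * (x*t)^r)) * (1 / (1 - x))^(Suc (l + r))"
      by (rule mult_left_mono[OF binom_le[OF x]]) (use c0 x t in simp)
    finally show "(\<Sum>p\<le>K. (c * ((x*t)^l * (x*t)^r)) * (real ((l + p + r) choose p) * x^p))
       \<le> (c * ((x*t)^l * (x*t)^r)) * (1 / (1 - x))^(Suc (l + r))" .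
  qed
  also have "\<dots> = (\<Sum>l\<le>K. \<Sum>r\<le>K. (c / (1 - x)) * (u^l * u^r))"
  proof (intro sum.cong refl)
    fix l r :: nat
    show "(c * ((x*t)^l * (x*t)^r)) * (1 / (1 - x))^(Suc (l + r)) = (c / (1 - x)) * (u^l * u^r)"
      unfolding u_def using x by (simp add: power_add power_divide field_simps)
  qed
  also have "\<dots> = (c / (1 - x)) * (\<Sum>l\<le>K. \<Sum>r\<le>K. u^l * u^r)"
    by (simp add: sum_distrib_left)
  also have "\<dots> \<le> (c / (1 - x)) * (1 / (1 - u)^2)"
    by (rule mult_left_mono[OF double_geom_le[OF u0]]) (use U c0 x in \<open>simp_all add: u_def\<close>)
  also have "\<dots> = x^2 * t / ((1 - x) * (1 - x * t / (1 - x))^2)"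
    unfolding c_def u_def by simp
  finally show ?thesis .
qed


lemma step:
  fixes x :: real
  assumes x: "0 \<le> x" "x < 1" and U: "x * Tser x N / (1 - x) < 1"
  shows "Tser x (Suc N) \<le> 1 + x * Tser x N + x^2 * Tser x N / ((1 - x) * (1 - x * Tser x N / (1 - x))^2)"
proof -
  define t where "t = Tser x N"
  define K where "K = Suc N"
  have t0: "0 \<le> t" unfolding t_def using Tser_nonneg[OF x(1)] .
  have a: "Tser x (Suc N) = 1 + (\<Sum>n\<le>N. real (aseq (Suc n)) * x^(Suc n))"
    unfolding Tser_def by (subst sum.atMost_Suc_shift) (simp add: aseq0)
  have b: "(\<Sum>n\<le>N. real (aseq (Suc n)) * x^(Suc n)) \<le> (\<Sum>n\<le>N. (real (aseq n) + real (Rn K (Suc n))) * x^(Suc n))"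
  proof (rule sum_mono)
    fix n assume n: "n \<in> {..N}"
    have "aseq (Suc n) \<le> aseq n + Rn (Suc n) (Suc n)" using aseq_rec[of "Suc n"] by simp
    also have "\<dots> \<le> aseq n + Rn K (Suc n)" using Rn_mono[of "Suc n" K] n K_def by simp
    finally have "real (aseq (Suc n)) \<le> real (aseq n) + real (Rn K (Suc n))" by linarith
    then show "real (aseq (Suc n)) * x^(Suc n) \<le> (real (aseq n) + real (Rn K (Suc n))) * x^(Suc n)"
      using x by (simp add: mult_right_mono)
  qed
  have c: "(\<Sum>n\<le>N. (real (aseq n) + real (Rn K (Suc n))) * x^(Suc n)) = x * t + (\<Sum>n\<le>N. real (Rn K (Suc n)) * x^(Suc n))"
    unfolding t_def Tser_def sum_distrib_left sum.distrib[symmetric] by (rule sum.cong) (simp_all add: algebra_simps)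
  have d: "(\<Sum>n\<le>N. real (Rn K (Suc n)) * x^(Suc n)) \<le> (\<Sum>m\<le>K. real (Rn K m) * x^m)"
  proof -
    have "(\<Sum>m\<le>K. real (Rn K m) * x^m) = real (Rn K 0) * x^0 + (\<Sum>n\<le>N. real (Rn K (Suc n)) * x^(Suc n))"
      unfolding K_def by (rule sum.atMost_Suc_shift)
    moreover have "0 \<le> real (Rn K 0) * x^0" by simp
    ultimately show ?thesis by linarith
  qed
  have e: "(\<Sum>m\<le>K. real (Rn K m) * x^m) = (\<Sum>l\<le>K. \<Sum>p\<le>K. \<Sum>r\<le>K. real ((l + p + r) choose p) * (\<Sum>m\<le>K. real (beta (fsl l p r) m) * x^m))"
  proof -
    have "(\<Sum>m\<le>K. real (Rn K m) * x^m) = (\<Sum>m\<le>K. \<Sum>l\<le>K. \<Sum>p\<le>K. \<Sum>r\<le>K. real ((l + p + r) choose p) * (real (beta (fsl l p r) m) * x^m))"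
      unfolding Rn_def by (simp add: sum_distrib_right mult.assoc)
    also have "\<dots> = (\<Sum>l\<le>K. \<Sum>m\<le>K. \<Sum>p\<le>K. \<Sum>r\<le>K. real ((l + p + r) choose p) * (real (beta (fsl l p r) m) * x^m))"
      by (rule sum.swap)
    also have "\<dots> = (\<Sum>l\<le>K. \<Sum>p\<le>K. \<Sum>m\<le>K. \<Sum>r\<le>K. real ((l + p + r) choose p) * (real (beta (fsl l p r) m) * x^m))"
      by (rule sum.cong[OF refl], rule sum.swap)
    also have "\<dots> = (\<Sum>l\<le>K. \<Sum>p\<le>K. \<Sum>r\<le>K. \<Sum>m\<le>K. real ((l + p + r) choose p) * (real (beta (fsl l p r) m) * x^m))"
      by (rule sum.cong[OF refl], rule sum.cong[OF refl], rule sum.swap)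
    also have "\<dots> = (\<Sum>l\<le>K. \<Sum>p\<le>K. \<Sum>r\<le>K. real ((l + p + r) choose p) * (\<Sum>m\<le>K. real (beta (fsl l p r) m) * x^m))"
      by (simp add: sum_distrib_left)
    finally show ?thesis .
  qed
  have f: "(\<Sum>l\<le>K. \<Sum>p\<le>K. \<Sum>r\<le>K. real ((l + p + r) choose p) * (\<Sum>m\<le>K. real (beta (fsl l p r) m) * x^m))
     \<le> (\<Sum>l\<le>K. \<Sum>p\<le>K. \<Sum>r\<le>K. real ((l + p + r) choose p) * (x^(l + p + r + 2) * t^(l + r + 1)))"
  proof (intro sum_mono mult_left_mono)
    fix l p r
    have "(\<Sum>m\<le>K. real (beta (fsl l p r) m) * x^m) \<le> x^(length (fsl l p r)) * (Tser x (K - 1))^(nfree (fsl l p r))"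
      by (rule beta_gf[OF x(1)])
    then show "(\<Sum>m\<le>K. real (beta (fsl l p r) m) * x^m) \<le> x^(l + p + r + 2) * t^(l + r + 1)"
      unfolding fsl_length fsl_nfree K_def t_def by simp
  qed simp
  have g: "(\<Sum>l\<le>K. \<Sum>p\<le>K. \<Sum>r\<le>K. real ((l + p + r) choose p) * (x^(l + p + r + 2) * t^(l + r + 1)))
     \<le> x^2 * t / ((1 - x) * (1 - x * t / (1 - x))^2)"
    by (rule rearr[OF x t0]) (use U in \<open>simp add: t_def\<close>)
  show ?thesis unfolding a t_def[symmetric] using b c d e f g by linarith
qed

definition x0 :: real where "x0 = 1000000000 / 4642126305"
definition ys :: real where "ys = 187511 / 100000"

lemma numeric: "1 + x0 * ys + x0^2 * ys / ((1 - x0) * (1 - x0 * ys / (1 - x0))^2) \<le> ys"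
  unfolding x0_def ys_def by (simp add: field_simps power2_eq_square)

lemma Tser_bound: "Tser x0 N \<le> ys"
proof (induction N)
  case 0
  show ?case unfolding Tser_def ys_def by (simp add: aseq0)
next
  case (Suc N)
  have x: "0 \<le> x0" "x0 < 1" unfolding x0_def by simp_all
  define t where "t = Tser x0 N"
  have t0: "0 \<le> t" unfolding t_def using Tser_nonneg[OF x(1)] .
  have ty: "t \<le> ys" using Suc t_def by simp
  have Uy: "x0 * ys / (1 - x0) < 1" unfolding x0_def ys_def by simp
  have Ut: "x0 * t / (1 - x0) \<le> x0 * ys / (1 - x0)"
    using ty x by (intro divide_right_mono mult_left_mono) simp_all
  have U: "x0 * t / (1 - x0) < 1" using Ut Uy by linarith
  have "Tser x0 (Suc N) \<le> 1 + x0 * t + x0^2 * t / ((1 - x0) * (1 - x0 * t / (1 - x0))^2)"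
    unfolding t_def by (rule step[OF x U[unfolded t_def]])
  also have "\<dots> \<le> 1 + x0 * ys + x0^2 * ys / ((1 - x0) * (1 - x0 * ys / (1 - x0))^2)"
  proof -
    have "x0 * t \<le> x0 * ys" using ty x by (simp add: mult_left_mono)
    moreover have "x0^2 * t / ((1 - x0) * (1 - x0 * t / (1 - x0))^2) \<le> x0^2 * ys / ((1 - x0) * (1 - x0 * ys / (1 - x0))^2)"
    proof (rule frac_le)
      show "0 \<le> x0^2 * ys" unfolding x0_def ys_def by simp
      show "x0^2 * t \<le> x0^2 * ys" using ty by (simp add: mult_left_mono)
      have p: "0 < 1 - x0 * ys / (1 - x0)" using Uy by simp
      show "0 < (1 - x0) * (1 - x0 * ys / (1 - x0))^2" using p x by simp
      have "1 - x0 * ys / (1 - x0) \<le> 1 - x0 * t / (1 - x0)" using Ut by simp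
      then have "(1 - x0 * ys / (1 - x0))^2 \<le> (1 - x0 * t / (1 - x0))^2"
        using p by (intro power_mono) simp_all
      then show "(1 - x0) * (1 - x0 * ys / (1 - x0))^2 \<le> (1 - x0) * (1 - x0 * t / (1 - x0))^2"
        using x by (simp add: mult_left_mono)
    qed
    ultimately show ?thesis by linarith
  qed
  also have "\<dots> \<le> ys" by (rule numeric)
  finally show ?case .
qed

lemma aseq_bound: "real (aseq n) \<le> ys * (4642126305 / 1000000000) ^ n"
proof -
  have "real (aseq n) * x0^n \<le> Tser x0 n"
    unfolding Tser_def by (rule member_le_sum) (auto simp: x0_def)
  also have "\<dots> \<le> ys" by (rule Tser_bound)
  finally have "real (aseq n) * x0^n \<le> ys" .
  have "x0^n * (4642126305 / 1000000000) ^ n = 1"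
    unfolding x0_def by (simp add: power_mult_distrib[symmetric])
  have A: "real (aseq n) * x0^n * (4642126305 / 1000000000) ^ n \<le> ys * (4642126305 / 1000000000) ^ n"
    by (rule mult_right_mono[OF \<open>real (aseq n) * x0^n \<le> ys\<close>]) simp
  have B: "real (aseq n) * x0^n * (4642126305 / 1000000000) ^ n = real (aseq n)"
    by (metis mult.assoc mult.right_neutral \<open>x0^n * (4642126305 / 1000000000) ^ n = 1\<close>)
  show ?thesis using A unfolding B .
qed


lemma path_edges_map: "path_edges (map g vs) = (image g) ` path_edges vs"
proof
  show "path_edges (map g vs) \<subseteq> (image g) ` path_edges vs"
  proof
    fix e assume "e \<in> path_edges (map g vs)"
    then obtain i where i: "Suc i < length vs" "e = {map g vs ! i, map g vs ! Suc i}"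
      unfolding path_edges_def by auto
    then have "e = g ` {vs ! i, vs ! Suc i}" by simp
    moreover have "{vs ! i, vs ! Suc i} \<in> path_edges vs" using i unfolding path_edges_def by blast
    ultimately show "e \<in> (image g) ` path_edges vs" by blast
  qed
  show "(image g) ` path_edges vs \<subseteq> path_edges (map g vs)"
  proof
    fix e assume "e \<in> (image g) ` path_edges vs"
    then obtain i where i: "Suc i < length vs" "e = g ` {vs ! i, vs ! Suc i}"
      unfolding path_edges_def by auto
    then have "e = {map g vs ! i, map g vs ! Suc i}" by simp
    then show "e \<in> path_edges (map g vs)" using i unfolding path_edges_def by (intro CollectI exI[of _ i]) simp
  qed
qed

lemma geo_to_comb:
  assumes cw: "clockwise_numbering n num S" and E: "ordered_ncp_partition S n num E"
  defines "idx \<equiv> inv_into {1..n} num"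
  shows "(image idx) ` E \<in> validE {1..n}" and "E \<subseteq> Pow S"
proof -
  have bij: "bij_betw num {1..n} S" using cw unfolding clockwise_numbering_def by (rule conjunct1)
  have ori0: "\<forall>i j k. 1 \<le> i \<and> i < j \<and> j < k \<and> k \<le> n \<longrightarrow> orient (num i) (num j) (num k) < 0"
    using cw unfolding clockwise_numbering_def by (rule conjunct2)
  have ori: "\<And>i j k. 1 \<le> i \<Longrightarrow> i < j \<Longrightarrow> j < k \<Longrightarrow> k \<le> n \<Longrightarrow> orient (num i) (num j) (num k) < 0"
    using ori0 by blast
  have bij': "bij_betw idx S {1..n}" unfolding idx_def by (rule bij_betw_inv_into[OF bij])
  have injS: "inj_on idx S" using bij' unfolding bij_betw_def by (rule conjunct1)
  have idxS: "idx ` S = {1..n}" using bij' unfolding bij_betw_def by (rule conjunct2)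
  have numidx: "\<And>p. p \<in> S \<Longrightarrow> num (idx p) = p" unfolding idx_def by (rule bij_betw_inv_into_right[OF bij])
  have injN: "inj_on num {1..n}" using bij unfolding bij_betw_def by (rule conjunct1)
  have nc: "non_crossing E" using E unfolding ordered_ncp_partition_def by (rule conjunct1)
  have exP: "\<exists>P. path_decomposition S E P \<and> (\<forall>vs\<in>P. \<forall>ws\<in>P. vs \<noteq> ws \<longrightarrow>
           (let idx = inv_into {1..n} num;
                i = min (idx (hd vs)) (idx (last vs));
                j = max (idx (hd vs)) (idx (last vs))
            in i < j \<longrightarrow>
               (\<forall>x\<in>{hd ws, last ws}. \<not> (i < idx x \<and> idx x < j))))"
    using E unfolding ordered_ncp_partition_def by (rule conjunct2)
  then obtain P where pdoc: "path_decomposition S E P \<and> (\<forall>vs\<in>P. \<forall>ws\<in>P. vs \<noteq> ws \<longrightarrow>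
           (let idx = inv_into {1..n} num;
                i = min (idx (hd vs)) (idx (last vs));
                j = max (idx (hd vs)) (idx (last vs))
            in i < j \<longrightarrow>
               (\<forall>x\<in>{hd ws, last ws}. \<not> (i < idx x \<and> idx x < j))))" by (rule exE)
  have pd: "path_decomposition S E P" using pdoc by (rule conjunct1)
  have oc: "\<forall>vs\<in>P. \<forall>ws\<in>P. vs \<noteq> ws \<longrightarrow>
           (let idx = inv_into {1..n} num;
                i = min (idx (hd vs)) (idx (last vs));
                j = max (idx (hd vs)) (idx (last vs))
            in i < j \<longrightarrow>
               (\<forall>x\<in>{hd ws, last ws}. \<not> (i < idx x \<and> idx x < j)))" using pdoc by (rule conjunct2)
  have pdall: "(\<forall>vs\<in>P. vs \<noteq> [] \<and> distinct vs) \<and> (\<forall>vs\<in>P. \<forall>ws\<in>P. vs \<noteq> ws \<longrightarrow> set vs \<inter> set ws = {}) \<and>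
     (\<Union>vs\<in>P. set vs) = S \<and> E = (\<Union>vs\<in>P. path_edges vs)"
    using pd unfolding path_decomposition_def .
  note pd1 = pdall[THEN conjunct1]
  note pd2 = pdall[THEN conjunct2, THEN conjunct1]
  note pd3 = pdall[THEN conjunct2, THEN conjunct2, THEN conjunct1]
  note pd4 = pdall[THEN conjunct2, THEN conjunct2, THEN conjunct2]
  have setS: "\<And>vs. vs \<in> P \<Longrightarrow> set vs \<subseteq> S" unfolding pd3[symmetric] by blast
  show ES: "E \<subseteq> Pow S"
  proof
    fix e assume "e \<in> E"
    then have "e \<in> (\<Union>vs\<in>P. path_edges vs)" using pd4 by simp
    then obtain vs where "vs \<in> P" "e \<in> path_edges vs" by blast
    then show "e \<in> Pow S" using path_edges_sub setS by blast
  qed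
  define P' where "P' = map idx ` P"
  have pd': "path_decomposition {1..n} ((image idx) ` E) P'"
    unfolding path_decomposition_def
  proof (intro conjI)
    show "\<forall>vs\<in>P'. vs \<noteq> [] \<and> distinct vs"
    proof
      fix vs' assume "vs' \<in> P'"
      then obtain vs where vs: "vs \<in> P" "vs' = map idx vs" unfolding P'_def by blast
      have "inj_on idx (set vs)" using injS setS[OF vs(1)] inj_on_subset by blast
      then show "vs' \<noteq> [] \<and> distinct vs'" using pd1 vs by (simp add: distinct_map)
    qed
    show "\<forall>vs\<in>P'. \<forall>ws\<in>P'. vs \<noteq> ws \<longrightarrow> set vs \<inter> set ws = {}"
    proof (intro ballI impI)
      fix vs' ws' assume "vs' \<in> P'" "ws' \<in> P'" "vs' \<noteq> ws'"
      then obtain vs ws where vs: "vs \<in> P" "vs' = map idx vs" and ws: "ws \<in> P" "ws' = map idx ws"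
        unfolding P'_def by blast
      then have "vs \<noteq> ws" using \<open>vs' \<noteq> ws'\<close> by blast
      then have "set vs \<inter> set ws = {}" using pd2 vs ws by blast
      then show "set vs' \<inter> set ws' = {}" using vs ws setS injS
        by (auto simp: inj_on_def) (metis subsetD disjoint_iff)+
    qed
    show "(\<Union>vs\<in>P'. set vs) = {1..n}"
    proof -
      have "(\<Union>vs\<in>P'. set vs) = idx ` (\<Union>vs\<in>P. set vs)" unfolding P'_def by auto
      then show ?thesis using pd3 idxS by simp
    qed
    show "(image idx) ` E = (\<Union>vs\<in>P'. path_edges vs)"
      unfolding pd4 P'_def by (auto simp: path_edges_map)
  qed
  have cnc: "cnoncross ((image idx) ` E)"
    unfolding cnoncross_def
  proof (intro allI impI)
    fix a b c d :: nat
    assume e1: "{a,b} \<in> (image idx) ` E" and e2: "{c,d} \<in> (image idx) ` E" and abcd: "a < c" "c < b" "b < d"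
    obtain f1 where f1: "f1 \<in> E" "{a,b} = idx ` f1" using e1 by blast
    obtain f2 where f2: "f2 \<in> E" "{c,d} = idx ` f2" using e2 by blast
    have f1S: "f1 \<subseteq> S" "f2 \<subseteq> S" using ES f1 f2 by auto
    have rng: "a \<in> {1..n}" "b \<in> {1..n}" "c \<in> {1..n}" "d \<in> {1..n}"
      using f1 f2 f1S idxS by blast+
    have f1eq: "f1 = {num a, num b}"
    proof -
      have "num ` (idx ` f1) = (\<lambda>x. x) ` f1" unfolding image_image
        by (rule image_cong[OF refl]) (use numidx f1S in blast)
      then have "num ` (idx ` f1) = f1" by simp
      then show ?thesis using f1(2) by (metis image_empty image_insert)
    qed
    have f2eq: "f2 = {num c, num d}"
    proof -
      have "num ` (idx ` f2) = (\<lambda>x. x) ` f2" unfolding image_image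
        by (rule image_cong[OF refl]) (use numidx f1S in blast)
      then have "num ` (idx ` f2) = f2" by simp
      then show ?thesis using f2(2) by (metis image_empty image_insert)
    qed
    have dist: "num a \<noteq> num c" "num a \<noteq> num d" "num b \<noteq> num c" "num b \<noteq> num d"
      using injN rng abcd unfolding inj_on_def by (metis less_irrefl less_trans)+
    have neq: "f1 \<noteq> f2" using f1eq f2eq dist by auto
    have inter: "f1 \<inter> f2 = {}" using f1eq f2eq dist by auto
    have o1: "orient (num a) (num c) (num d) < 0" using ori rng abcd by auto
    have o2': "orient (num c) (num b) (num d) < 0" using ori rng abcd by auto
    have o2: "orient (num b) (num c) (num d) > 0" using o2' orient_cyc by (metis neg_less_0_iff_less)
    have o3': "orient (num a) (num c) (num b) < 0" using ori rng abcd by auto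
    have o3: "orient (num a) (num b) (num c) > 0" using o3' orient_cyc by (metis neg_less_0_iff_less)
    have o4: "orient (num a) (num b) (num d) < 0" using ori rng abcd by auto
    obtain z where z: "z \<in> closed_segment (num a) (num b)" "z \<in> closed_segment (num c) (num d)"
      using segs_meet[OF o1 o2 o3 o4] by blast
    have "z \<in> convex hull f1 \<inter> convex hull f2" using z f1eq f2eq by (simp add: segment_convex_hull)
    moreover have "convex hull f1 \<inter> convex hull f2 \<subseteq> f1 \<inter> f2"
      using nc f1(1) f2(1) neq unfolding non_crossing_def by blast
    ultimately show False using inter by blast
  qed
  have cor: "cordered P'"
    unfolding cordered_def
  proof (intro ballI impI)
    fix vs' ws' assume "vs' \<in> P'" "ws' \<in> P'" "vs' \<noteq> ws'"
    then obtain vs ws where vs: "vs \<in> P" "vs' = map idx vs" and ws: "ws \<in> P" "ws' = map idx ws"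
      unfolding P'_def by blast
    then have "vs \<noteq> ws" using \<open>vs' \<noteq> ws'\<close> by blast
    have ne: "vs \<noteq> []" "ws \<noteq> []" using pd1 vs ws by auto
    have h: "hd vs' = idx (hd vs)" "last vs' = idx (last vs)" "hd ws' = idx (hd ws)" "last ws' = idx (last ws)"
      using ne vs ws by (simp_all add: hd_map last_map)
    show "let i = min (hd vs') (last vs'); j = max (hd vs') (last vs')
          in i < j \<longrightarrow> (\<forall>x\<in>{hd ws', last ws'}. \<not> (i < x \<and> x < j))"
      using oc vs(1) ws(1) \<open>vs \<noteq> ws\<close> unfolding h Let_def idx_def by auto
  qed
  show "(image idx) ` E \<in> validE {1..n}"
    unfolding validE_def cvalidP_def using pd' cnc cor by blast
qed

theorem theorem5:
  shows "\<exists>(C::real) (k::nat). \<forall>(n::nat) (S::point set) (num::nat \<Rightarrow> point).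
     finite S \<and> card S = n \<and> convex_position S \<and> clockwise_numbering n num S \<longrightarrow>
     real (card {E. ordered_ncp_partition S n num E})
       \<le> C * real (n + 1) ^ k * (4.642126305::real) ^ n"
proof (intro exI allI impI)
  fix n :: nat and S :: "point set" and num :: "nat \<Rightarrow> point"
  assume H: "finite S \<and> card S = n \<and> convex_position S \<and> clockwise_numbering n num S"
  then have cw: "clockwise_numbering n num S" by blast
  define idx where "idx = inv_into {1..n} num"
  have bij: "bij_betw num {1..n} S" using cw unfolding clockwise_numbering_def by blast
  have injS: "inj_on idx S" using bij_betw_inv_into[OF bij] unfolding idx_def bij_betw_def by blast
  define A where "A = {E. ordered_ncp_partition S n num E}"
  have sub: "(image (image idx)) ` A \<subseteq> validE {1..n}"
    using geo_to_comb(1)[OF cw] unfolding A_def idx_def by blast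
  have "inj_on (image idx) (Pow S)" by (rule inj_on_image) (use injS in simp)
  then have inj2: "inj_on (image (image idx)) (Pow (Pow S))" by (rule inj_on_image[of "image idx" "Pow (Pow S)", simplified])
  have "A \<subseteq> Pow (Pow S)" using geo_to_comb(2)[OF cw] unfolding A_def by blast
  then have inj: "inj_on (image (image idx)) A" using inj2 inj_on_subset by blast
  have "card A \<le> card (validE {1..n})"
    by (rule card_inj_on_le[OF inj sub finite_validE]) simp
  also have "\<dots> \<le> aseq n" using aseq_ge[of "{1..n}"] by simp
  finally have "real (card A) \<le> real (aseq n)" by simp
  also have "\<dots> \<le> ys * (4642126305 / 1000000000) ^ n" by (rule aseq_bound)
  finally show "real (card {E. ordered_ncp_partition S n num E}) \<le> ys * real (n + 1) ^ 0 * (4.642126305::real) ^ n"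
    unfolding A_def by simp
qed


end
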